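(* Let $p\geq3$ be a prime, $n\leq p$ and $\xi\in\mathcal{CP}^{\mathsf{s}}_p(n)$. Then \[\#\operatorname{Std}^{\mathsf{s}}_p(\xi)=\begin{cases}\dfrac{n-2u+1}{n-u}\dbinom{n-2}{u-1}, &\text{if } \xi=(p-u,u) \text{ for some } 1\leq u\leq\frac{p-3}{2},\\[6pt] \dfrac{n!}{\prod_{(i,j)\in\xi^{\mathsf{s}}}h^{\mathsf{s}}_\xi(i,j)}, &\text{otherwise}.\end{cases}\]
   Context: $\mathcal{SP}(n)$ is the set of strict partitions of $n$. $\mathcal{CP}^{\mathsf{s}}_p(n)$ is the set of $\xi\in\mathcal{SP}(n)$ with either $1\leq\xi_1\leq\frac{p+1}{2}$, or $\xi_1=p-u$ and $\xi_2\leq u$ for some $1\leq u\leq\frac{p-3}{2}$. The shifted Young diagram of $\xi$ is $\xi^{\mathsf{s}}=\{(i,j):1\leq i\leq\ell(\xi),\ i\leq j\leq i+\xi_i-1\}$. The $(i,j)$-hook of $\xi^{\mathsf{s}}$ consists of $(i,j)$, the nodes of $\xi^{\mathsf{s}}$ in row $i$ to its right, the nodes in column $j$ below it, and additionally, if the diagonal node $(j,j)$ lies in column $j$ of $\xi^{\mathsf{s}}$, all nodes of row $j+1$; $h^{\mathsf{s}}_\xi(i,j)$ is the number of nodes of this hook. A standard shifted tableau of shape $\xi$ is a filling of $\xi^{\mathsf{s}}$ by $1,\dots,n$ increasing along rows and down columns; $\operatorname{Std}^{\mathsf{s}}(\xi)$ is their set and $T_{(i,j)}$ is the entry in node $(i,j)$.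 For $\xi\in\mathcal{CP}^{\mathsf{s}}_p(n)$: if $\xi_1=p-u$ and $\xi_2=u$ for some $1\leq u\leq\frac{p-3}{2}$, then $\operatorname{Std}^{\mathsf{s}}_p(\xi)=\{T\in\operatorname{Std}^{\mathsf{s}}(\xi): T_{(2,\xi_2+1)}>T_{(1,\xi_1)}\}$; otherwise $\operatorname{Std}^{\mathsf{s}}_p(\xi)=\operatorname{Std}^{\mathsf{s}}(\xi)$. *)

theory Defs
  imports Complex_Main "HOL-Computational_Algebra.Primes"
begin

text \<open>A partition is a list of its parts, xi = [xi_1, xi_2, ...].
  part xi i is xi_i (1-based), with the convention xi_i = 0 for i > length xi.\<close>

definition part :: "nat list \<Rightarrow> nat \<Rightarrow> nat" where
  "part \<xi> i = (if 1 \<le> i \<and> i \<le> length \<xi> then \<xi> ! (i - 1) else 0)"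

definition SP :: "nat \<Rightarrow> nat list set" where
  "SP n = {\<xi>. sorted_wrt (>) \<xi> \<and> 0 \<notin> set \<xi> \<and> sum_list \<xi> = n}"

definition CPs :: "nat \<Rightarrow> nat \<Rightarrow> nat list set" where
  "CPs p n = {\<xi> \<in> SP n.
     (1 \<le> part \<xi> 1 \<and> 2 * part \<xi> 1 \<le> p + 1) \<or>
     (\<exists>u. 1 \<le> u \<and> 2 * u + 3 \<le> p \<and> part \<xi> 1 = p - u \<and> part \<xi> 2 \<le> u)}"

definition shifted_diagram :: "nat list \<Rightarrow> (nat \<times> nat) set" where
  "shifted_diagram \<xi> = {(i, j). 1 \<le> i \<and> i \<le> length \<xi> \<and> i \<le> j \<and> j \<le> i + part \<xi> i - 1}"

definition shifted_hook :: "nat list \<Rightarrow> nat \<Rightarrow> nat \<Rightarrow> (nat \<times> nat) set" where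
  "shifted_hook \<xi> i j =
     {(i, j)}
     \<union> {(a, b) \<in> shifted_diagram \<xi>. a = i \<and> b > j}
     \<union> {(a, b) \<in> shifted_diagram \<xi>. b = j \<and> a > i}
     \<union> (if (j, j) \<in> shifted_diagram \<xi> then {(a, b) \<in> shifted_diagram \<xi>. a = j + 1} else {})"

definition shifted_hook_length :: "nat list \<Rightarrow> nat \<Rightarrow> nat \<Rightarrow> nat" where
  "shifted_hook_length \<xi> i j = card (shifted_hook \<xi> i j)"

definition Std_s :: "nat list \<Rightarrow> ((nat \<times> nat) \<Rightarrow> nat) set" where
  "Std_s \<xi> = {T. bij_betw T (shifted_diagram \<xi>) {1..sum_list \<xi>}
      \<and> (\<forall>x. x \<notin> shifted_diagram \<xi> \<longrightarrow> T x = 0)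
      \<and> (\<forall>i j j'. (i, j) \<in> shifted_diagram \<xi> \<longrightarrow> (i, j') \<in> shifted_diagram \<xi> \<longrightarrow> j < j'
                 \<longrightarrow> T (i, j) < T (i, j'))
      \<and> (\<forall>i i' j. (i, j) \<in> shifted_diagram \<xi> \<longrightarrow> (i', j) \<in> shifted_diagram \<xi> \<longrightarrow> i < i'
                 \<longrightarrow> T (i, j) < T (i', j))}"

definition Std_s_p :: "nat \<Rightarrow> nat list \<Rightarrow> ((nat \<times> nat) \<Rightarrow> nat) set" where
  "Std_s_p p \<xi> =
     (if \<exists>u. 1 \<le> u \<and> 2 * u + 3 \<le> p \<and> part \<xi> 1 = p - u \<and> part \<xi> 2 = u
      then {T \<in> Std_s \<xi>. T (2, part \<xi> 2 + 1) > T (1, part \<xi> 1)}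
      else Std_s \<xi>)"

end

theory Submission
  imports Defs "HOL-Computational_Algebra.Polynomial" "HOL-Library.FuncSet"
begin


lemma lagrange_coeff:
  fixes f :: "real poly" and Y :: "real set"
  assumes fin: "finite Y" and cY: "card Y = Suc m" and df: "degree f \<le> m"
  shows "(\<Sum>y\<in>Y. poly f y / (\<Prod>z\<in>Y-{y}. y - z)) = coeff f m"
proof -
  define b where "b y = (\<Prod>z\<in>Y-{y}. [:-z,1:])" for y
  define L where "L = (\<Sum>y\<in>Y. smult (poly f y / (\<Prod>z\<in>Y-{y}. y - z)) (b y))"
  have degb: "degree (b y) = m" if "y \<in> Y" for y
  proof -
    have "degree (b y) = (\<Sum>z\<in>Y-{y}. degree [:-z,1:])"
      unfolding b_def by (rule degree_prod_eq_sum_degree) auto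
    also have "\<dots> = card (Y - {y})" by simp
    also have "\<dots> = m" using that cY fin by simp
    finally show ?thesis .
  qed
  have cb: "coeff (b y) m = 1" if "y \<in> Y" for y
  proof -
    have "coeff (b y) m = lead_coeff (b y)" using degb[OF that] by simp
    also have "\<dots> = 1" unfolding b_def lead_coeff_prod by simp
    finally show ?thesis .
  qed
  have degL: "degree L \<le> m"
    unfolding L_def
    by (rule degree_sum_le) (use fin degb in \<open>auto intro: order.trans[OF degree_smult_le]\<close>)
  have evL: "poly L x = poly f x" if x: "x \<in> Y" for x
  proof -
    have "poly L x = (\<Sum>y\<in>Y. (poly f y / (\<Prod>z\<in>Y-{y}. y - z)) * (\<Prod>z\<in>Y-{y}. x - z))"
      unfolding L_def b_def by (simp add: poly_sum poly_prod)
    also have "\<dots> = (poly f x / (\<Prod>z\<in>Y-{x}. x - z)) * (\<Prod>z\<in>Y-{x}. x - z)"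
    proof -
      have "(\<Sum>y\<in>Y-{x}. (poly f y / (\<Prod>z\<in>Y-{y}. y - z)) * (\<Prod>z\<in>Y-{y}. x - z)) = 0"
      proof (rule sum.neutral, rule ballI)
        fix y assume "y \<in> Y - {x}"
        then have "(\<Prod>z\<in>Y-{y}. x - z) = 0" using fin x by (subst prod_zero_iff) auto
        then show "(poly f y / (\<Prod>z\<in>Y-{y}. y - z)) * (\<Prod>z\<in>Y-{y}. x - z) = 0" by simp
      qed
      then show ?thesis by (simp add: sum.remove[OF fin x])
    qed
    also have "\<dots> = poly f x"
    proof -
      have "(\<Prod>z\<in>Y-{x}. x - z) \<noteq> 0" using fin by (subst prod_zero_iff) auto
      then show ?thesis by simp
    qed
    finally show ?thesis .
  qed
  have "L = f"
    by (rule poly_eqI_degree[of Y]) (use evL degL df cY in auto)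
  then have "coeff f m = coeff L m" by simp
  also have "\<dots> = (\<Sum>y\<in>Y. poly f y / (\<Prod>z\<in>Y-{y}. y - z))"
    unfolding L_def by (simp add: coeff_sum cb)
  finally show ?thesis by simp
qed

lemma coeff_mult_le:
  fixes p q :: "real poly"
  assumes "degree p \<le> a" "degree q \<le> b"
  shows "coeff (p * q) (a + b) = coeff p a * coeff q b"
proof -
  have "coeff (p * q) (a + b) = (\<Sum>i\<le>a+b. coeff p i * coeff q (a + b - i))"
    by (simp add: coeff_mult)
  also have "\<dots> = coeff p a * coeff q (a + b - a)"
  proof (rule sum.remove[THEN trans])
    show "finite {..a+b}" by simp
    show "a \<in> {..a+b}" by simp
    have "(\<Sum>i\<in>{..a+b}-{a}. coeff p i * coeff q (a + b - i)) = 0"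
    proof (rule sum.neutral, rule ballI)
      fix i assume i: "i \<in> {..a+b}-{a}"
      show "coeff p i * coeff q (a + b - i) = 0"
      proof (cases "i < a")
        case True
        then have "a + b - i > b" using i by auto
        then have "coeff q (a + b - i) = 0" using assms(2) by (intro coeff_eq_0) auto
        then show ?thesis by simp
      next
        case False
        then have "i > a" using i by auto
        then have "coeff p i = 0" using assms(1) by (intro coeff_eq_0) auto
        then show ?thesis by simp
      qed
    qed
    then show "coeff p a * coeff q (a + b - a) + (\<Sum>i\<in>{..a+b}-{a}. coeff p i * coeff q (a + b - i))
      = coeff p a * coeff q (a + b - a)" by simp
  qed
  finally show ?thesis by simp
qed

lemma prodquad:
  fixes c :: "real \<Rightarrow> real"
  assumes "finite X"
  shows "degree (\<Prod>x\<in>X. [:-c x,0,1:]) = 2 * card X \<and> coeff (\<Prod>x\<in>X. [:-c x,0,1:]) (2 * card X) = 1"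
proof -
  have d: "degree (\<Prod>x\<in>X. [:-c x,0,1:]) = 2 * card X"
    by (subst degree_prod_eq_sum_degree) auto
  moreover have "lead_coeff (\<Prod>x\<in>X. [:-c x,0,1:]) = 1"
    unfolding lead_coeff_prod by simp
  ultimately show ?thesis by simp
qed

lemma aux_ring: "(a::'a::comm_ring) * p - b * q = a * (p - q) + (a - b) * q"
  by (simp add: algebra_simps)

lemma diffquad:
  fixes c1 c2 :: "real \<Rightarrow> real"
  assumes "finite X"
  shows "degree ((\<Prod>x\<in>X. [:-c1 x,0,1:]) - (\<Prod>x\<in>X. [:-c2 x,0,1:])) \<le> 2 * card X - 2
    \<and> coeff ((\<Prod>x\<in>X. [:-c1 x,0,1:]) - (\<Prod>x\<in>X. [:-c2 x,0,1:])) (2 * card X - 2) = (\<Sum>x\<in>X. c2 x - c1 x)"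
  using assms
proof (induction X rule: finite_induct)
  case empty
  then show ?case by simp
next
  case (insert x X)
  define P1 where "P1 = (\<Prod>x\<in>X. [:-c1 x,0,1:])"
  define P2 where "P2 = (\<Prod>x\<in>X. [:-c2 x,0,1:])"
  define k where "k = card X"
  have ck: "card (insert x X) = Suc k" using insert k_def by simp
  have P2: "degree P2 = 2 * k" "coeff P2 (2 * k) = 1" using prodquad[OF insert(1)] P2_def k_def by auto
  have IH: "degree (P1 - P2) \<le> 2 * k - 2" "coeff (P1 - P2) (2 * k - 2) = (\<Sum>x\<in>X. c2 x - c1 x)"
    using insert(3) P1_def P2_def k_def by auto
  have eq: "(\<Prod>x\<in>insert x X. [:-c1 x,0,1:]) - (\<Prod>x\<in>insert x X. [:-c2 x,0,1:])
     = [:-c1 x,0,1:] * (P1 - P2) + smult (c2 x - c1 x) P2"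
  proof -
    have ab: "[:-c1 x,0,1:] - [:-c2 x,0,1:] = [:c2 x - c1 x:]" by simp
    have "[:-c1 x,0,1:] * P1 - [:-c2 x,0,1:] * P2 = [:-c1 x,0,1:] * (P1 - P2) + ([:-c1 x,0,1:] - [:-c2 x,0,1:]) * P2"
      by (rule aux_ring)
    then show ?thesis using insert by (simp add: P1_def P2_def ab)
  qed
  show ?case
  proof (cases "k = 0")
    case True
    then have "X = {}" using insert(1) k_def by simp
    then show ?thesis using insert by (simp add: algebra_simps)
  next
    case False
    have d1: "degree ([:-c1 x,0,1:] * (P1 - P2)) \<le> 2 * k"
      using IH(1) False by (intro order.trans[OF degree_mult_le]) auto
    have d2: "degree (smult (c2 x - c1 x) P2) \<le> 2 * k"
      using P2 by (intro order.trans[OF degree_smult_le]) auto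
    have c1: "coeff ([:-c1 x,0,1:] * (P1 - P2)) (2 * k) = coeff (P1 - P2) (2 * k - 2)"
    proof -
      have kk: "2 * k = 2 + (2 * k - 2)" using False by simp
      have "coeff ([:-c1 x,0,1:] * (P1 - P2)) (2 + (2 * k - 2)) = coeff [:-c1 x,0,1:] 2 * coeff (P1 - P2) (2 * k - 2)"
        by (rule coeff_mult_le) (use IH(1) in auto)
      moreover have "coeff [:-c1 x,0,1:] 2 = 1" by (simp add: numeral_2_eq_2)
      ultimately show ?thesis by (metis kk mult_1)
    qed
    define A1 where "A1 = [:-c1 x,0,1:] * (P1 - P2)"
    define B1 where "B1 = smult (c2 x - c1 x) P2"
    have kk: "2 * Suc k - 2 = 2 * k" by simp
    have "degree (A1 + B1) \<le> 2 * k"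
      using degree_add_le d1 d2 unfolding A1_def B1_def by blast
    moreover have "coeff (A1 + B1) (2 * k) = (\<Sum>x\<in>insert x X. c2 x - c1 x)"
      using c1 IH(2) P2 insert(1,2) unfolding A1_def B1_def by (simp add: coeff_add)
    ultimately show ?thesis unfolding eq ck kk A1_def B1_def by simp
  qed
qed

definition Aq :: "real \<Rightarrow> real \<Rightarrow> real" where
  "Aq x y = (x - y - 1) * (x + y) / ((x - y) * (x + y - 1))"

lemma key_identity:
  fixes X :: "real set"
  assumes fin: "finite X" and ge: "\<forall>x\<in>X. x \<ge> 1"
  shows "(\<Sum>x\<in>X. x * (\<Prod>y\<in>X-{x}. Aq x y)) = \<Sum>X"
proof (cases "X = {}")
  case True
  then show ?thesis by simp
next
  case False
  define k where "k = card X"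
  have k1: "k \<ge> 1" using False fin k_def by (simp add: Suc_leI card_gt_0_iff)
  define c1 where "c1 x = (x + 1/2)^2" for x :: real
  define c2 where "c2 x = (x - 1/2)^2" for x :: real
  define P1 where "P1 = (\<Prod>x\<in>X. [:-c1 x,0,1:])"
  define P2 where "P2 = (\<Prod>x\<in>X. [:-c2 x,0,1:])"
  define E where "E = P1 - P2"
  define f where "f = smult 2 (pCons 0 E)"
  have dE: "degree E \<le> 2 * k - 2" and cE0: "coeff E (2 * k - 2) = (\<Sum>x\<in>X. c2 x - c1 x)"
    using diffquad[OF fin, of c1 c2] unfolding E_def P1_def P2_def k_def by auto
  have "(\<Sum>x\<in>X. c2 x - c1 x) = (\<Sum>x\<in>X. -2 * x)"
    by (rule sum.cong) (auto simp: c1_def c2_def power2_eq_square algebra_simps)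
  also have "\<dots> = -2 * \<Sum>X" by (simp add: sum_distrib_left)
  finally have cE: "coeff E (2 * k - 2) = -2 * \<Sum>X" using cE0 by simp
  have kk: "2 * k - 1 = Suc (2 * k - 2)" using k1 by simp
  have df: "degree f \<le> 2 * k - 1"
  proof -
    have "degree f \<le> degree (pCons 0 E)" unfolding f_def by (rule degree_smult_le)
    also have "\<dots> \<le> Suc (degree E)" by (rule degree_pCons_le)
    also have "\<dots> \<le> 2 * k - 1" using dE kk by simp
    finally show ?thesis .
  qed
  have cf: "coeff f (2 * k - 1) = -4 * \<Sum>X"
    unfolding f_def kk using cE by simp
  define U where "U = (\<lambda>x. x - 1/2) ` X"
  define V where "V = (\<lambda>x. 1/2 - x) ` X"
  define Y where "Y = U \<union> V"
  have injU: "inj_on (\<lambda>x::real. x - 1/2) A" for A by (rule inj_onI) simp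
  have injV: "inj_on (\<lambda>x::real. 1/2 - x) A" for A by (rule inj_onI) simp
  have disj: "U \<inter> V = {}"
  proof -
    have "a - 1/2 \<noteq> 1/2 - b" if "a \<in> X" "b \<in> X" for a b :: real 
    proof -
      have "a \<ge> 1" "b \<ge> 1" using ge that by auto
      then show ?thesis by linarith
    qed
    then show ?thesis unfolding U_def V_def by blast
  qed
  have finU: "finite U" "finite V" using fin unfolding U_def V_def by auto
  have cU: "card U = k" "card V = k"
    unfolding U_def V_def k_def by (auto intro!: card_image injU injV)
  have cY: "card Y = Suc (2 * k - 1)"
    unfolding Y_def using card_Un_disjoint[OF finU disj] cU k1 by simp
  have finY: "finite Y" using finU Y_def by simp
  define T where "T y = poly f y / (\<Prod>z\<in>Y-{y}. y - z)" for y
  have lag: "(\<Sum>y\<in>Y. T y) = -4 * \<Sum>X"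
    unfolding T_def using lagrange_coeff[OF finY cY df] cf by simp
  define N where "N x0 = (\<Prod>x\<in>X-{x0}. (x0 - x - 1) * (x0 + x))" for x0
  define D where "D x0 = (\<Prod>x\<in>X-{x0}. (x0 - x) * (x0 + x - 1))" for x0
  have ND: "N x0 / D x0 = (\<Prod>y\<in>X-{x0}. Aq x0 y)" for x0
    unfolding N_def D_def Aq_def by (simp add: prod_dividef)
  have polyf: "poly f y = 2 * y * (poly P1 y - poly P2 y)" for y
    unfolding f_def E_def by simp
  have P2z: "poly P2 y = 0" if "x0 \<in> X" "y * y = (x0 - 1/2)^2" for x0 y
    unfolding P2_def poly_prod using that fin
    by (subst prod_zero_iff) (auto simp: c2_def power2_eq_square intro!: bexI[of _ x0])
  have P1v: "poly P1 y = (-1) * (2 * x0) * N x0" if x0: "x0 \<in> X" and yy: "y * y = (x0 - 1/2)^2" for x0 y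
  proof -
    have "poly P1 y = (\<Prod>x\<in>X. (x0 - x - 1) * (x0 + x))"
      unfolding P1_def poly_prod
      by (rule prod.cong) (use yy in \<open>auto simp: c1_def power2_eq_square algebra_simps\<close>)
    also have "\<dots> = ((x0 - x0 - 1) * (x0 + x0)) * N x0"
      unfolding N_def by (rule prod.remove[OF fin x0])
    finally show ?thesis by simp
  qed
  have TU: "T (x0 - 1/2) = -2 * x0 * (\<Prod>y\<in>X-{x0}. Aq x0 y)" if x0: "x0 \<in> X" for x0
  proof -
    define y where "y = x0 - 1/2"
    have yU: "y \<in> U" using x0 unfolding U_def y_def by auto
    have "Y - {y} = (U - {y}) \<union> V" unfolding Y_def using disj yU by auto
    then have "(\<Prod>z\<in>Y-{y}. y - z) = (\<Prod>z\<in>U-{y}. y - z) * (\<Prod>z\<in>V. y - z)"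
      using finU disj by (simp add: prod.union_disjoint[symmetric]; subst prod.union_disjoint) auto
    also have "(\<Prod>z\<in>U-{y}. y - z) = (\<Prod>x\<in>X-{x0}. x0 - x)"
    proof -
      have "U - {y} = (\<lambda>x. x - 1/2) ` (X - {x0})" unfolding U_def y_def by auto
      then show ?thesis by (simp add: prod.reindex[OF injU] y_def)
    qed
    also have "(\<Prod>z\<in>V. y - z) = (\<Prod>x\<in>X. x0 + x - 1)"
      unfolding V_def by (simp add: prod.reindex[OF injV] y_def algebra_simps)
    also have "\<dots> = (x0 + x0 - 1) * (\<Prod>x\<in>X-{x0}. x0 + x - 1)" by (rule prod.remove[OF fin x0])
    finally have den: "(\<Prod>z\<in>Y-{y}. y - z) = (2 * x0 - 1) * D x0"
      unfolding D_def by (simp add: prod.distrib)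
    have yy: "y * y = (x0 - 1/2)^2" unfolding y_def by (simp add: power2_eq_square)
    have num: "poly f y = (2 * x0 - 1) * ((-1) * (2 * x0) * N x0)"
      unfolding polyf P1v[OF x0 yy] P2z[OF x0 yy] by (simp add: y_def)
    have nz: "2 * x0 - 1 \<noteq> 0" using ge x0 by auto
    have "T y = (-2 * x0) * (N x0 / D x0)" unfolding T_def num den using nz by simp
    then show ?thesis unfolding ND y_def .
  qed
  have TV: "T (1/2 - x0) = -2 * x0 * (\<Prod>y\<in>X-{x0}. Aq x0 y)" if x0: "x0 \<in> X" for x0
  proof -
    define y where "y = 1/2 - x0"
    have yV: "y \<in> V" using x0 unfolding V_def y_def by auto
    have "Y - {y} = U \<union> (V - {y})" unfolding Y_def using disj yV by auto
    then have "(\<Prod>z\<in>Y-{y}. y - z) = (\<Prod>z\<in>U. y - z) * (\<Prod>z\<in>V-{y}. y - z)"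
      using finU disj by (simp; subst prod.union_disjoint) auto
    also have "(\<Prod>z\<in>V-{y}. y - z) = (\<Prod>x\<in>X-{x0}. x - x0)"
    proof -
      have "V - {y} = (\<lambda>x. 1/2 - x) ` (X - {x0})" unfolding V_def y_def by auto
      then show ?thesis by (simp add: prod.reindex[OF injV] y_def)
    qed
    also have "(\<Prod>z\<in>U. y - z) = (\<Prod>x\<in>X. 1 - x0 - x)"
      unfolding U_def by (simp add: prod.reindex[OF injU] y_def algebra_simps)
    also have "\<dots> = (1 - x0 - x0) * (\<Prod>x\<in>X-{x0}. 1 - x0 - x)" by (rule prod.remove[OF fin x0])
    finally have den0: "(\<Prod>z\<in>Y-{y}. y - z) = (1 - 2 * x0) * (\<Prod>x\<in>X-{x0}. (1 - x0 - x) * (x - x0))"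
      by (simp add: prod.distrib)
    have "(\<Prod>x\<in>X-{x0}. (1 - x0 - x) * (x - x0)) = D x0"
      unfolding D_def by (rule prod.cong) (auto simp: algebra_simps)
    then have den: "(\<Prod>z\<in>Y-{y}. y - z) = (1 - 2 * x0) * D x0" using den0 by simp
    have yy: "y * y = (x0 - 1/2)^2" unfolding y_def by (simp add: power2_eq_square algebra_simps)
    have num: "poly f y = (1 - 2 * x0) * ((-1) * (2 * x0) * N x0)"
      unfolding polyf P1v[OF x0 yy] P2z[OF x0 yy] by (simp add: y_def)
    have nz: "1 - 2 * x0 \<noteq> 0" using ge x0 by auto
    have "T y = (-2 * x0) * (N x0 / D x0)" unfolding T_def num den using nz by simp
    then show ?thesis unfolding ND y_def .
  qed
  have "(\<Sum>y\<in>Y. T y) = (\<Sum>y\<in>U. T y) + (\<Sum>y\<in>V. T y)"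
    unfolding Y_def by (rule sum.union_disjoint[OF finU disj])
  also have "(\<Sum>y\<in>U. T y) = (\<Sum>x\<in>X. -2 * x * (\<Prod>y\<in>X-{x}. Aq x y))"
    unfolding U_def by (simp add: sum.reindex[OF injU] TU)
  also have "(\<Sum>y\<in>V. T y) = (\<Sum>x\<in>X. -2 * x * (\<Prod>y\<in>X-{x}. Aq x y))"
    unfolding V_def by (simp add: sum.reindex[OF injV] TV)
  finally have "(\<Sum>y\<in>Y. T y) = -4 * (\<Sum>x\<in>X. x * (\<Prod>y\<in>X-{x}. Aq x y))"
    by (simp add: sum_distrib_left algebra_simps)
  then show ?thesis using lag by simp
qed



definition Pp :: "nat set \<Rightarrow> real" where
  "Pp S = (\<Prod>s\<in>S. \<Prod>t\<in>{t\<in>S. t<s}. (real s - real t) / (real s + real t))"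

definition gS :: "nat set \<Rightarrow> real" where
  "gS S = fact (\<Sum>S) / (\<Prod>s\<in>S. fact s) * Pp S"

lemma Pp_insert:
  assumes fin: "finite S" and x: "x \<notin> S"
  shows "Pp (insert x S) = Pp S * (\<Prod>t\<in>S. \<bar>real x - real t\<bar> / (real x + real t))"
proof -
  define \<phi> where "\<phi> s t = (real s - real t) / (real s + real t)" for s t :: nat
  have e1: "{t\<in>insert x S. t<x} = {t\<in>S. t<x}" by auto
  have e2: "(\<Prod>t\<in>{t\<in>insert x S. t<s}. \<phi> s t) = (if x < s then \<phi> s x else 1) * (\<Prod>t\<in>{t\<in>S. t<s}. \<phi> s t)"
    if "s \<in> S" for s
  proof (cases "x < s")
    case True
    then have "{t\<in>insert x S. t<s} = insert x {t\<in>S. t<s}" by auto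
    then show ?thesis using True x fin by simp
  next
    case False
    then have "{t\<in>insert x S. t<s} = {t\<in>S. t<s}" by auto
    then show ?thesis using False by simp
  qed
  have "Pp (insert x S) = (\<Prod>t\<in>{t\<in>S. t<x}. \<phi> x t) * (\<Prod>s\<in>S. \<Prod>t\<in>{t\<in>insert x S. t<s}. \<phi> s t)"
    unfolding Pp_def \<phi>_def using fin x e1 by simp
  also have "(\<Prod>s\<in>S. \<Prod>t\<in>{t\<in>insert x S. t<s}. \<phi> s t)
      = (\<Prod>s\<in>S. (if x < s then \<phi> s x else 1)) * Pp S"
  proof -
    have "(\<Prod>s\<in>S. \<Prod>t\<in>{t\<in>insert x S. t<s}. \<phi> s t)
      = (\<Prod>s\<in>S. (if x < s then \<phi> s x else 1) * (\<Prod>t\<in>{t\<in>S. t<s}. \<phi> s t))"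
      by (rule prod.cong[OF refl e2])
    also have "\<dots> = (\<Prod>s\<in>S. (if x < s then \<phi> s x else 1)) * (\<Prod>s\<in>S. \<Prod>t\<in>{t\<in>S. t<s}. \<phi> s t)"
      by (rule prod.distrib)
    finally show ?thesis unfolding Pp_def \<phi>_def .
  qed
  also have "(\<Prod>s\<in>S. (if x < s then \<phi> s x else 1)) = (\<Prod>s\<in>{s\<in>S. x < s}. \<phi> s x)"
    using fin by (simp add: prod.If_cases Int_def)
  finally have A: "Pp (insert x S) = Pp S * ((\<Prod>t\<in>{t\<in>S. t<x}. \<phi> x t) * (\<Prod>s\<in>{s\<in>S. x < s}. \<phi> s x))"
    by (simp add: algebra_simps)
  have "(\<Prod>t\<in>S. \<bar>real x - real t\<bar> / (real x + real t)) = (\<Prod>t\<in>S. if t < x then \<phi> x t else \<phi> t x)"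
    by (rule prod.cong) (auto simp: \<phi>_def add.commute)
  also have "\<dots> = (\<Prod>t\<in>{t\<in>S. t<x}. \<phi> x t) * (\<Prod>s\<in>{s\<in>S. x < s}. \<phi> s x)"
  proof -
    have "S \<inter> - {t. t < x} = {s\<in>S. x < s}" using x by (auto simp: not_less order.order_iff_strict)
    then show ?thesis using fin by (simp add: prod.If_cases Int_def)
  qed
  finally show ?thesis using A by simp
qed

lemma gS_insert0:
  assumes fin: "finite R" and z: "0 \<notin> R"
  shows "gS (insert 0 R) = gS R"
proof -
  have "(\<Prod>t\<in>R. \<bar>real 0 - real t\<bar> / (real 0 + real t)) = 1"
  proof (rule prod.neutral, rule ballI)
    fix t assume "t \<in> R"
    then have "t \<noteq> 0" using z by metis
    then show "\<bar>real 0 - real t\<bar> / (real 0 + real t) = 1" by simp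
  qed
  then have "Pp (insert 0 R) = Pp R" using Pp_insert[OF fin z] by simp
  then show ?thesis unfolding gS_def using fin z by simp
qed

lemma A_factor:
  fixes s t :: nat
  assumes "t \<noteq> s" "t \<noteq> s - 1" "t \<ge> 1" "s \<ge> 1"
  shows "\<bar>real (s - 1) - real t\<bar> / (real (s - 1) + real t)
       = \<bar>real s - real t\<bar> / (real s + real t) * Aq (real s) (real t)"
proof -
  have r1: "real (s - 1) = real s - 1" using assms by simp
  have t1: "real t \<ge> 1" using assms by simp
  have nz1: "real s + real t \<noteq> 0" "real s + real t - 1 \<noteq> 0" using t1 assms by auto
  have gen: "\<bar>d - 1\<bar> / (a - 1) = \<bar>d\<bar> / a * ((d - 1) * a / (d * (a - 1)))"
    if "d \<ge> 2 \<or> d \<le> -1" "a \<noteq> 0" "a - 1 \<noteq> 0" for d a :: real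
  proof -
    have dnz: "d \<noteq> 0" using that by auto
    from that(1) show ?thesis
    proof
      assume "d \<ge> 2"
      then have "\<bar>d - 1\<bar> = d - 1" "\<bar>d\<bar> = d" by auto
      then show ?thesis using dnz that by (simp add: field_simps)
    next
      assume "d \<le> -1"
      then have "\<bar>d - 1\<bar> = -(d - 1)" "\<bar>d\<bar> = -d" by auto
      then show ?thesis using dnz that by (simp add: field_simps)
    qed
  qed
  have "real s - real t \<ge> 2 \<or> real s - real t \<le> -1"
  proof (cases "t < s")
    case True
    then have "t + 2 \<le> s" using assms by linarith
    then show ?thesis by linarith
  next
    case False
    then show ?thesis using assms by simp
  qed
  note g = gen[OF this nz1]
  have e: "real s - 1 - real t = (real s - real t) - 1" "real s - 1 + real t = (real s + real t) - 1" by simp_all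
  show ?thesis unfolding r1 Aq_def e by (rule g)
qed

lemma gS_step:
  assumes fin: "finite R" and z: "0 \<notin> R" and s1: "s \<ge> 1" and sR: "s \<notin> R" and s1R: "s - 1 \<notin> R"
  shows "gS (insert (s - 1) R) = gS (insert s R) * real s / real (s + \<Sum>R) * (\<Prod>t\<in>R. Aq (real s) (real t))"
proof -
  define M where "M = \<Sum>R"
  define F where "F = (\<Prod>t\<in>R. fact t :: real)"
  define \<Pi>1 where "\<Pi>1 = (\<Prod>t\<in>R. \<bar>real s - real t\<bar> / (real s + real t))"
  define \<Pi>0 where "\<Pi>0 = (\<Prod>t\<in>R. \<bar>real (s - 1) - real t\<bar> / (real (s - 1) + real t))"
  define AA where "AA = (\<Prod>t\<in>R. Aq (real s) (real t))"
  have P0: "\<Pi>0 = \<Pi>1 * AA"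
    unfolding \<Pi>0_def \<Pi>1_def AA_def prod.distrib[symmetric]
  proof (rule prod.cong[OF refl])
    fix t assume t: "t \<in> R"
    then have "t \<noteq> 0" using z by metis
    then show "\<bar>real (s - 1) - real t\<bar> / (real (s - 1) + real t)
       = \<bar>real s - real t\<bar> / (real s + real t) * Aq (real s) (real t)"
      using t sR s1R s1 by (intro A_factor) auto
  qed
  have g1: "gS (insert s R) = fact (s + M) / (fact s * F) * (Pp R * \<Pi>1)"
    unfolding gS_def M_def F_def \<Pi>1_def using fin sR by (simp add: Pp_insert)
  have g0: "gS (insert (s - 1) R) = fact (s - 1 + M) / (fact (s - 1) * F) * (Pp R * \<Pi>0)"
    unfolding gS_def M_def F_def \<Pi>0_def using fin s1R by (simp add: Pp_insert)
  have fs: "fact s = real s * fact (s - 1)" using s1 by (simp add: fact_reduce)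
  have fN: "fact (s + M) = real (s + M) * fact (s - 1 + M)"
  proof -
    have "fact (s + M) = real (s + M) * fact (s + M - 1)" using s1 by (simp add: fact_reduce)
    moreover have "s + M - 1 = s - 1 + M" using s1 by simp
    ultimately show ?thesis by simp
  qed
  have Fnz: "F \<noteq> 0" unfolding F_def using fin by (subst prod_zero_iff) auto
  have "fact (s - 1) \<noteq> (0::real)" by simp
  have gen: "x / (y * F) * (P * (Q * A)) = (N * x) / ((s' * y) * F) * (P * Q) * s' / N * A"
    if "s' \<noteq> 0" "N \<noteq> 0" "y \<noteq> 0" "F \<noteq> 0" for x y P Q A N s' :: real
    using that by (simp add: field_simps)
  have "real s \<noteq> 0" "real (s + M) \<noteq> 0" using s1 by auto
  then show ?thesis unfolding g0 M_def[symmetric] AA_def[symmetric] g1 P0 fs fN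
    using gen Fnz \<open>fact (s - 1) \<noteq> 0\<close> by blast
qed

lemma gS_rec:
  assumes fin: "finite S" and ne: "S \<noteq> {}" and z: "0 \<notin> S"
  shows "(\<Sum>s\<in>{s\<in>S. s - 1 \<notin> S}. gS (insert (s - 1) (S - {s}))) = gS S"
proof -
  define N where "N = \<Sum>S"
  define Q where "Q s = (\<Prod>t\<in>S-{s}. Aq (real s) (real t))" for s
  have Npos: "N > 0"
  proof -
    obtain s where s: "s \<in> S" using ne by auto
    then have "s \<noteq> 0" using z by metis
    moreover have "s \<le> N"
    proof -
      have "\<Sum>S = s + \<Sum>(S - {s})" using fin s by (rule sum.remove)
      then show ?thesis unfolding N_def by simp
    qed
    ultimately show ?thesis by simp
  qed
  have trm: "gS (insert (s - 1) (S - {s})) = gS S * real s / real N * Q s"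
    if "s \<in> S" "s - 1 \<notin> S" for s
  proof -
    have s1: "s \<ge> 1" using that z by (cases s) auto
    have "insert s (S - {s}) = S" using that by auto
    moreover have "s + \<Sum>(S - {s}) = N" unfolding N_def using fin that by (simp add: sum.remove)
    ultimately show ?thesis unfolding Q_def
      using gS_step[of "S - {s}" s] fin z s1 that by auto
  qed
  have zero: "Q s = 0" if "s \<in> S" "s - 1 \<in> S" for s
  proof -
    have "s \<ge> 2" using that z by (cases s) (auto, cases "s - 1", auto)
    then have "s - 1 \<in> S - {s}" using that by auto
    moreover have "Aq (real s) (real (s - 1)) = 0" unfolding Aq_def using \<open>s \<ge> 2\<close> by (simp add: of_nat_diff)
    ultimately show ?thesis unfolding Q_def using fin by (subst prod_zero_iff) auto
  qed
  have "(\<Sum>s\<in>{s\<in>S. s - 1 \<notin> S}. gS (insert (s - 1) (S - {s})))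
      = (\<Sum>s\<in>{s\<in>S. s - 1 \<notin> S}. gS S * real s / real N * Q s)"
    by (rule sum.cong[OF refl], rule trm) auto
  also have "\<dots> = (\<Sum>s\<in>S. gS S * real s / real N * Q s)"
    by (rule sum.mono_neutral_left) (use fin zero in auto)
  also have "\<dots> = gS S / real N * (\<Sum>s\<in>S. real s * Q s)"
    by (simp add: sum_distrib_left algebra_simps)
  also have "(\<Sum>s\<in>S. real s * Q s) = real N"
  proof -
    have inj: "inj_on real S" by (simp add: inj_on_def)
    have ki: "(\<Sum>x\<in>real ` S. x * (\<Prod>y\<in>real ` S - {x}. Aq x y)) = \<Sum>(real ` S)"
    proof (rule key_identity)
      show "finite (real ` S)" using fin by simp
      show "\<forall>x\<in>real ` S. 1 \<le> x"
      proof
        fix x assume "x \<in> real ` S"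
        then obtain s where s: "s \<in> S" "x = real s" by auto
        then have "s \<noteq> 0" using z by metis
        then show "1 \<le> x" using s by simp
      qed
    qed
    have "(\<Sum>x\<in>real ` S. x * (\<Prod>y\<in>real ` S - {x}. Aq x y)) = (\<Sum>s\<in>S. real s * Q s)"
    proof -
      have "(\<Sum>x\<in>real ` S. x * (\<Prod>y\<in>real ` S - {x}. Aq x y))
           = (\<Sum>s\<in>S. real s * (\<Prod>y\<in>real ` S - {real s}. Aq (real s) y))"
        by (simp add: sum.reindex[OF inj])
      also have "\<dots> = (\<Sum>s\<in>S. real s * Q s)"
      proof (rule sum.cong[OF refl])
        fix s assume "s \<in> S"
        have "real ` S - {real s} = real ` (S - {s})" by auto
        moreover have "inj_on real (S - {s})" by (simp add: inj_on_def)
        ultimately show "real s * (\<Prod>y\<in>real ` S - {real s}. Aq (real s) y) = real s * Q s"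
          unfolding Q_def by (simp add: prod.reindex)
      qed
      finally show ?thesis .
    qed
    moreover have "\<Sum>(real ` S) = real N" unfolding N_def by (simp add: sum.reindex[OF inj])
    ultimately show ?thesis using ki by simp
  qed
  finally show ?thesis using Npos by simp
qed



abbreviation D where "D \<equiv> shifted_diagram"

lemma D_mem: "(i, j) \<in> D \<xi> \<longleftrightarrow> 1 \<le> i \<and> i \<le> length \<xi> \<and> i \<le> j \<and> j \<le> i + part \<xi> i - 1"
  unfolding shifted_diagram_def by simp

lemma part_le_sum: "part \<xi> i \<le> sum_list \<xi>"
  unfolding part_def by (auto intro: elem_le_sum_list)

lemma finite_D: "finite (D \<xi>)"
proof -
  have "D \<xi> \<subseteq> {1..length \<xi>} \<times> {0..length \<xi> + sum_list \<xi>}"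
  proof
    fix x assume x: "x \<in> D \<xi>"
    obtain a b where ab: "x = (a, b)" by force
    have "part \<xi> a \<le> sum_list \<xi>" by (rule part_le_sum)
    then show "x \<in> {1..length \<xi>} \<times> {0..length \<xi> + sum_list \<xi>}" using x unfolding ab D_mem by auto
  qed
  then show ?thesis by (rule finite_subset) simp
qed

lemma std_finite: "finite (Std_s \<xi>)"
proof -
  define N where "N = sum_list \<xi>"
  have inj: "inj_on (\<lambda>T. restrict T (D \<xi>)) (Std_s \<xi>)"
  proof (rule inj_onI)
    fix T T' assume T: "T \<in> Std_s \<xi>" and T': "T' \<in> Std_s \<xi>"
      and eq: "restrict T (D \<xi>) = restrict T' (D \<xi>)"
    show "T = T'"
    proof
      fix x show "T x = T' x"
      proof (cases "x \<in> D \<xi>")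
        case True
        then show ?thesis using fun_cong[OF eq, of x] by simp
      next
        case False
        then show ?thesis using T T' unfolding Std_s_def by (cases x) auto
      qed
    qed
  qed
  have "(\<lambda>T. restrict T (D \<xi>)) ` Std_s \<xi> \<subseteq> PiE (D \<xi>) (\<lambda>_. {1..N})"
  proof
    fix f assume "f \<in> (\<lambda>T. restrict T (D \<xi>)) ` Std_s \<xi>"
    then obtain T where T: "T \<in> Std_s \<xi>" and f: "f = restrict T (D \<xi>)" by auto
    from T have "bij_betw T (D \<xi>) {1..N}" unfolding Std_s_def N_def by auto
    then have "\<forall>x\<in>D \<xi>. T x \<in> {1..N}" by (auto simp: bij_betw_def)
    then show "f \<in> PiE (D \<xi>) (\<lambda>_. {1..N})" unfolding f by auto
  qed
  moreover have "finite (PiE (D \<xi>) (\<lambda>_. {1..N}))" by (intro finite_PiE finite_D) auto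
  ultimately have "finite ((\<lambda>T. restrict T (D \<xi>)) ` Std_s \<xi>)" by (rule finite_subset)
  then show ?thesis using inj by (rule finite_imageD)
qed

lemma std_range:
  assumes "T \<in> Std_s \<xi>" "x \<in> D \<xi>"
  shows "1 \<le> T x \<and> T x \<le> sum_list \<xi>"
proof -
  from assms(1) have "bij_betw T (D \<xi>) {1..sum_list \<xi>}" unfolding Std_s_def by auto
  then have "T x \<in> {1..sum_list \<xi>}" using assms(2) by (auto simp: bij_betw_def)
  then show ?thesis by auto
qed

definition corner :: "nat list \<Rightarrow> nat \<times> nat \<Rightarrow> bool" where
  "corner \<xi> c \<longleftrightarrow> (\<forall>i j. (i, j) \<in> D \<xi> \<longrightarrow> (i = fst c \<longrightarrow> j \<le> snd c) \<and> (j = snd c \<longrightarrow> i \<le> fst c))"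

lemma std_corner:
  assumes T: "T \<in> Std_s \<xi>" and c: "c \<in> D \<xi>" and Tc: "T c = sum_list \<xi>"
  shows "corner \<xi> c"
  unfolding corner_def
proof (intro allI impI conjI)
  fix i j assume ij: "(i, j) \<in> D \<xi>"
  obtain i0 j0 where c0: "c = (i0, j0)" by force
  {
    assume "i = fst c"
    show "j \<le> snd c"
    proof (rule ccontr)
      assume "\<not> j \<le> snd c"
      then have "T c < T (i, j)" using T ij c unfolding Std_s_def c0 \<open>i = fst c\<close>
        by (auto simp: c0)
      then show False using std_range[OF T ij] Tc by simp
    qed
  }
  {
    assume "j = snd c"
    show "i \<le> fst c"
    proof (rule ccontr)
      assume "\<not> i \<le> fst c"
      then have "T c < T (i, j)" using T ij c unfolding Std_s_def c0 \<open>j = snd c\<close>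
        by (auto simp: c0)
      then show False using std_range[OF T ij] Tc by simp
    qed
  }
qed

lemma std_remove:
  assumes c: "c \<in> D \<xi>" and D': "D \<xi>' = D \<xi> - {c}" and N: "sum_list \<xi> = Suc (sum_list \<xi>')"
    and cor: "corner \<xi> c"
  shows "card {T \<in> Std_s \<xi>. T c = sum_list \<xi>} = card (Std_s \<xi>')"
proof -
  define N where "N = sum_list \<xi>"
  have N': "sum_list \<xi>' = N - 1" using N N_def by simp
  have cD': "c \<notin> D \<xi>'" using D' by simp
  have "bij_betw (\<lambda>T. T(c := 0)) {T \<in> Std_s \<xi>. T c = N} (Std_s \<xi>')"
  proof (rule bij_betw_byWitness[where f' = "\<lambda>T. T(c := N)"])
    show "\<forall>T\<in>{T \<in> Std_s \<xi>. T c = N}. (T(c := 0))(c := N) = T" by auto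
    show "\<forall>T\<in>Std_s \<xi>'. (T(c := N))(c := 0) = T"
    proof
      fix T assume "T \<in> Std_s \<xi>'"
      then have "T c = 0" using cD' unfolding Std_s_def by (cases c) auto
      then show "(T(c := N))(c := 0) = T" by auto
    qed
    show "(\<lambda>T. T(c := 0)) ` {T \<in> Std_s \<xi>. T c = N} \<subseteq> Std_s \<xi>'"
    proof
      fix T' assume "T' \<in> (\<lambda>T. T(c := 0)) ` {T \<in> Std_s \<xi>. T c = N}"
      then obtain T where T: "T \<in> Std_s \<xi>" "T c = N" and T': "T' = T(c := 0)" by auto
      have bij: "bij_betw T (D \<xi>) {1..N}" using T unfolding Std_s_def N_def by auto
      have "bij_betw T (D \<xi> - {c}) ({1..N} - {N})"
        by (rule bij_betw_DiffI[OF bij]) (use c T(2) N_def N in auto)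
      moreover have "{1..N} - {N} = {1..N - 1}" by auto
      ultimately have "bij_betw T (D \<xi>') {1..sum_list \<xi>'}" using D' N' by simp
      then have b2: "bij_betw T' (D \<xi>') {1..sum_list \<xi>'}"
        by (rule bij_betw_cong[THEN iffD1, rotated]) (use cD' T' in auto)
      show "T' \<in> Std_s \<xi>'"
        unfolding Std_s_def using b2 T(1) D' T' unfolding Std_s_def by auto
    qed
    show "(\<lambda>T. T(c := N)) ` Std_s \<xi>' \<subseteq> {T \<in> Std_s \<xi>. T c = N}"
    proof
      fix T' assume "T' \<in> (\<lambda>T. T(c := N)) ` Std_s \<xi>'"
      then obtain T where T: "T \<in> Std_s \<xi>'" and T': "T' = T(c := N)" by auto
      have bij: "bij_betw T (D \<xi>') {1..N - 1}" using T N' unfolding Std_s_def by auto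
      have rng: "T x < N" if "x \<in> D \<xi>'" for x
      proof -
        have "T x \<in> {1..N - 1}" using bij that by (auto simp: bij_betw_def)
        then show ?thesis using N N_def by auto
      qed
      have b1: "bij_betw T' (D \<xi>') {1..N - 1}"
        by (rule bij_betw_cong[THEN iffD1, rotated, OF bij]) (use cD' T' in auto)
      have "bij_betw T' (D \<xi>' \<union> {c}) ({1..N - 1} \<union> {N})"
        by (rule bij_betw_combine[OF b1]) (use T' in auto)
      moreover have "D \<xi>' \<union> {c} = D \<xi>" using D' c by auto
      moreover have "{1..N - 1} \<union> {N} = {1..N}" using N N_def by auto
      ultimately have b: "bij_betw T' (D \<xi>) {1..sum_list \<xi>}" using N_def by simp
      have z: "\<forall>x. x \<notin> D \<xi> \<longrightarrow> T' x = 0" using T T' c D' unfolding Std_s_def by auto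
      have row: "\<forall>i j j'. (i, j) \<in> D \<xi> \<longrightarrow> (i, j') \<in> D \<xi> \<longrightarrow> j < j' \<longrightarrow> T' (i, j) < T' (i, j')"
      proof (intro allI impI)
        fix i j j' assume a: "(i, j) \<in> D \<xi>" "(i, j') \<in> D \<xi>" "j < j'"
        show "T' (i, j) < T' (i, j')"
        proof (cases "(i, j) = c")
          case True
          then show ?thesis using cor a unfolding corner_def by force
        next
          case False
          note F1 = False
          show ?thesis
          proof (cases "(i, j') = c")
            case True
            then show ?thesis using F1 a rng D' T' by auto
          next
            case False
            then show ?thesis using F1 a T D' T' unfolding Std_s_def by auto
          qed
        qed
      qed
      have col: "\<forall>i i' j. (i, j) \<in> D \<xi> \<longrightarrow> (i', j) \<in> D \<xi> \<longrightarrow> i < i' \<longrightarrow> T' (i, j) < T' (i', j)"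
      proof (intro allI impI)
        fix i i' j assume a: "(i, j) \<in> D \<xi>" "(i', j) \<in> D \<xi>" "i < i'"
        show "T' (i, j) < T' (i', j)"
        proof (cases "(i, j) = c")
          case True
          then show ?thesis using cor a unfolding corner_def by force
        next
          case False
          note F1 = False
          show ?thesis
          proof (cases "(i', j) = c")
            case True
            then show ?thesis using F1 a rng D' T' by auto
          next
            case False
            then show ?thesis using F1 a T D' T' unfolding Std_s_def by auto
          qed
        qed
      qed
      show "T' \<in> {T \<in> Std_s \<xi>. T c = N}"
        unfolding Std_s_def using b z row col T' by auto
    qed
  qed
  then show ?thesis unfolding N_def by (rule bij_betw_same_card)
qed

lemma std_split:
  assumes N: "sum_list \<xi> \<ge> 1"
  shows "card (Std_s \<xi>) = (\<Sum>c\<in>D \<xi>. card {T \<in> Std_s \<xi>. T c = sum_list \<xi>})"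
proof -
  have "Std_s \<xi> = (\<Union>c\<in>D \<xi>. {T \<in> Std_s \<xi>. T c = sum_list \<xi>})"
  proof (intro equalityI subsetI)
    fix T assume T: "T \<in> Std_s \<xi>"
    then have "bij_betw T (D \<xi>) {1..sum_list \<xi>}" unfolding Std_s_def by auto
    then have "sum_list \<xi> \<in> T ` D \<xi>" using N by (auto simp: bij_betw_def)
    then show "T \<in> (\<Union>c\<in>D \<xi>. {T \<in> Std_s \<xi>. T c = sum_list \<xi>})" using T by force
  qed auto
  also have "card \<dots> = (\<Sum>c\<in>D \<xi>. card {T \<in> Std_s \<xi>. T c = sum_list \<xi>})"
  proof (rule card_UN_disjoint)
    show "finite (D \<xi>)" by (rule finite_D)
    show "\<forall>c\<in>D \<xi>. finite {T \<in> Std_s \<xi>. T c = sum_list \<xi>}" using std_finite by auto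
    show "\<forall>c\<in>D \<xi>. \<forall>c'\<in>D \<xi>. c \<noteq> c' \<longrightarrow> {T \<in> Std_s \<xi>. T c = sum_list \<xi>} \<inter> {T \<in> Std_s \<xi>. T c' = sum_list \<xi>} = {}"
    proof (intro ballI impI)
      fix c c' assume cc: "c \<in> D \<xi>" "c' \<in> D \<xi>" "c \<noteq> c'"
      show "{T \<in> Std_s \<xi>. T c = sum_list \<xi>} \<inter> {T \<in> Std_s \<xi>. T c' = sum_list \<xi>} = {}"
      proof (rule ccontr)
        assume "{T \<in> Std_s \<xi>. T c = sum_list \<xi>} \<inter> {T \<in> Std_s \<xi>. T c' = sum_list \<xi>} \<noteq> {}"
        then obtain T where T: "T \<in> Std_s \<xi>" "T c = sum_list \<xi>" "T c' = sum_list \<xi>" by auto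
        then have "inj_on T (D \<xi>)" unfolding Std_s_def bij_betw_def by auto
        then have "c = c'" using cc T by (metis inj_onD)
        then show False using cc by simp
      qed
    qed
  qed
  finally show ?thesis .
qed

definition strict :: "nat list \<Rightarrow> bool" where
  "strict \<xi> \<longleftrightarrow> sorted_wrt (>) \<xi> \<and> 0 \<notin> set \<xi>"

lemma strict_less: "strict \<xi> \<Longrightarrow> i < j \<Longrightarrow> j < length \<xi> \<Longrightarrow> \<xi> ! j < \<xi> ! i"
  unfolding strict_def using sorted_wrt_nth_less by fastforce

lemma strict_distinct: "strict \<xi> \<Longrightarrow> distinct \<xi>"
  unfolding distinct_conv_nth
  by (metis linorder_neq_iff strict_less order_less_irrefl)

lemma strict_pos: "strict \<xi> \<Longrightarrow> k < length \<xi> \<Longrightarrow> \<xi> ! k \<ge> 1"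
  unfolding strict_def by (metis nth_mem less_one not_le)

lemma strict_gap: "strict \<xi> \<Longrightarrow> a \<le> b \<Longrightarrow> b < length \<xi> \<Longrightarrow> \<xi> ! b + (b - a) \<le> \<xi> ! a"
proof (induction b)
  case 0
  then show ?case by simp
next
  case (Suc b)
  show ?case
  proof (cases "a = Suc b")
    case True
    then show ?thesis by simp
  next
    case False
    then have "a \<le> b" using Suc by simp
    then have "\<xi> ! b + (b - a) \<le> \<xi> ! a" using Suc by simp
    moreover have "\<xi> ! Suc b < \<xi> ! b" using Suc by (intro strict_less) auto
    ultimately show ?thesis using \<open>a \<le> b\<close> by simp
  qed
qed

lemma part_nth: "1 \<le> i \<Longrightarrow> i \<le> length \<xi> \<Longrightarrow> part \<xi> i = \<xi> ! (i - 1)"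
  unfolding part_def by simp

definition cell :: "nat list \<Rightarrow> nat \<Rightarrow> nat \<times> nat" where
  "cell \<xi> k = (Suc k, k + \<xi> ! k)"

lemma cell_D: "strict \<xi> \<Longrightarrow> k < length \<xi> \<Longrightarrow> cell \<xi> k \<in> D \<xi>"
  unfolding cell_def D_mem using strict_pos[of \<xi> k] by (simp add: part_nth)

lemma cell_corner:
  assumes st: "strict \<xi>" and k: "k < length \<xi>" and nk: "\<xi> ! k - 1 \<notin> set \<xi>"
  shows "corner \<xi> (cell \<xi> k)"
  unfolding corner_def
proof (intro allI impI)
  fix i j assume ij: "(i, j) \<in> D \<xi>"
  then have i: "1 \<le> i" "i \<le> length \<xi>" "i \<le> j" "j \<le> i + \<xi> ! (i - 1) - 1"
    by (auto simp: D_mem part_nth)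
  have A: "i = fst (cell \<xi> k) \<longrightarrow> j \<le> snd (cell \<xi> k)" using i by (auto simp: cell_def)
  have B: "j = snd (cell \<xi> k) \<longrightarrow> i \<le> fst (cell \<xi> k)"
  proof
    assume j: "j = snd (cell \<xi> k)"
    show "i \<le> fst (cell \<xi> k)"
    proof (rule ccontr)
      assume "\<not> i \<le> fst (cell \<xi> k)"
      then have ik: "i \<ge> k + 2" by (simp add: cell_def)
      define b where "b = i - 1"
      have b: "b < length \<xi>" "Suc k \<le> b" using ik i b_def by auto
      have g: "\<xi> ! b + (b - Suc k) \<le> \<xi> ! Suc k" using strict_gap[OF st b(2) b(1)] .
      have l: "\<xi> ! Suc k < \<xi> ! k" using b by (intro strict_less[OF st]) auto
      have "\<xi> ! Suc k \<noteq> \<xi> ! k - 1" using nk b by (metis Suc_le_lessD le_less_trans nth_mem)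
      then have l2: "\<xi> ! Suc k + 2 \<le> \<xi> ! k" using l by linarith
      have p: "\<xi> ! b \<ge> 1" using strict_pos[OF st b(1)] .
      have "k + \<xi> ! k \<le> i + \<xi> ! b - 1" using i j b_def by (simp add: cell_def)
      then show False using g l2 p b_def ik by linarith
    qed
  qed
  show "(i = fst (cell \<xi> k) \<longrightarrow> j \<le> snd (cell \<xi> k)) \<and> (j = snd (cell \<xi> k) \<longrightarrow> i \<le> fst (cell \<xi> k))"
    using A B by blast
qed

lemma corner_cell:
  assumes st: "strict \<xi>" and c: "c \<in> D \<xi>" and cor: "corner \<xi> c"
  shows "\<exists>k<length \<xi>. \<xi> ! k - 1 \<notin> set \<xi> \<and> c = cell \<xi> k"
proof -
  obtain i j where cij: "c = (i, j)" by force
  define k where "k = i - 1"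
  have i: "1 \<le> i" "i \<le> length \<xi>" "i \<le> j" "j \<le> i + \<xi> ! k - 1"
    using c unfolding cij k_def by (auto simp: D_mem part_nth)
  have kl: "k < length \<xi>" using i k_def by simp
  have pk: "\<xi> ! k \<ge> 1" using strict_pos[OF st kl] .
  have jeq: "j = k + \<xi> ! k"
  proof (rule ccontr)
    assume "j \<noteq> k + \<xi> ! k"
    then have "j < i + \<xi> ! k - 1" using i k_def by simp
    then have "(i, Suc j) \<in> D \<xi>" using i k_def by (auto simp: D_mem part_nth)
    then show False using cor unfolding corner_def cij by fastforce
  qed
  have nk: "\<xi> ! k - 1 \<notin> set \<xi>"
  proof
    assume "\<xi> ! k - 1 \<in> set \<xi>"
    then obtain m where m: "m < length \<xi>" "\<xi> ! m = \<xi> ! k - 1" by (auto simp: in_set_conv_nth)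
    have pk2: "\<xi> ! k \<ge> 2" using m st unfolding strict_def
      by (metis One_nat_def diff_is_0_eq' nth_mem one_add_one pk le_antisym not_less_eq_eq plus_1_eq_Suc)
    have mk: "m > k"
    proof (rule ccontr)
      assume "\<not> m > k"
      then have "m = k \<or> m < k" by auto
      then show False using m pk strict_less[OF st, of m k] kl by auto
    qed
    have m1: "m = Suc k"
    proof (rule ccontr)
      assume "m \<noteq> Suc k"
      then have "Suc k < m" using mk by simp
      then have "\<xi> ! m < \<xi> ! Suc k" using m by (intro strict_less[OF st]) auto
      moreover have "\<xi> ! Suc k < \<xi> ! k" using m \<open>Suc k < m\<close> by (intro strict_less[OF st]) auto
      ultimately show False using m pk by linarith
    qed
    have il: "i < length \<xi>" using m m1 k_def i by simp
    have pi: "part \<xi> (Suc i) = \<xi> ! i" using il by (simp add: part_nth)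
    have xi: "\<xi> ! i = \<xi> ! k - 1" using m m1 k_def i by simp
    have "(Suc i, j) \<in> D \<xi>"
      unfolding D_mem pi using il xi jeq pk2 k_def i by linarith
    then show False using cor unfolding corner_def cij by fastforce
  qed
  have "c = cell \<xi> k" unfolding cij cell_def using jeq k_def i by simp
  then show ?thesis using kl nk by blast
qed

definition rem :: "nat list \<Rightarrow> nat \<Rightarrow> nat list" where
  "rem \<xi> k = (if \<xi> ! k = 1 then butlast \<xi> else \<xi>[k := \<xi> ! k - 1])"

lemma rem_one:
  assumes st: "strict \<xi>" and k: "k < length \<xi>" and v: "\<xi> ! k = 1"
  shows "strict (rem \<xi> k) \<and> D (rem \<xi> k) = D \<xi> - {cell \<xi> k}
    \<and> sum_list \<xi> = Suc (sum_list (rem \<xi> k)) \<and> set (rem \<xi> k) = set \<xi> - {1}"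
proof -
  have kl: "k = length \<xi> - 1"
  proof (rule ccontr)
    assume "k \<noteq> length \<xi> - 1"
    then have "Suc k < length \<xi>" using k by simp
    then have "\<xi> ! Suc k < \<xi> ! k" by (intro strict_less[OF st]) auto
    then have "\<xi> ! Suc k = 0" using v by simp
    then show False using st \<open>Suc k < length \<xi>\<close> unfolding strict_def by (metis nth_mem)
  qed
  define ys where "ys = butlast \<xi>"
  have ne: "\<xi> \<noteq> []" using k by auto
  have xs: "\<xi> = ys @ [1]" unfolding ys_def using ne kl v
    by (metis append_butlast_last_id last_conv_nth)
  have r: "rem \<xi> k = ys" unfolding rem_def ys_def using v by simp
  have lk: "length ys = k" using xs kl by simp
  have dist: "distinct (ys @ [1])" using strict_distinct[OF st] xs by simp
  have st': "strict ys"
    using st unfolding strict_def xs by (simp add: sorted_wrt_append)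
  have set': "set ys = set \<xi> - {1}" using dist xs by auto
  have sum': "sum_list \<xi> = Suc (sum_list ys)" using xs by simp
  have partys: "part \<xi> i = (if i \<le> length ys then part ys i else if i = Suc (length ys) then 1 else 0)" for i
    unfolding xs part_def by (auto simp: nth_append)
  have D': "D ys = D \<xi> - {cell \<xi> k}"
  proof (intro set_eqI)
    fix x :: "nat \<times> nat"
    obtain i j where x: "x = (i, j)" by force
    have ck: "cell \<xi> k = (Suc (length ys), Suc (length ys))" unfolding cell_def using lk v by simp
    show "x \<in> D ys \<longleftrightarrow> x \<in> D \<xi> - {cell \<xi> k}"
    proof -
      have lx: "length \<xi> = Suc (length ys)" using xs by simp
      show ?thesis unfolding x ck Diff_iff D_mem partys lx by auto
    qed
  qed
  show ?thesis using st' D' sum' set' r by simp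
qed

lemma rem_big:
  assumes st: "strict \<xi>" and k: "k < length \<xi>" and v: "\<xi> ! k \<noteq> 1" and nk: "\<xi> ! k - 1 \<notin> set \<xi>"
  shows "strict (rem \<xi> k) \<and> D (rem \<xi> k) = D \<xi> - {cell \<xi> k}
    \<and> sum_list \<xi> = Suc (sum_list (rem \<xi> k)) \<and> set (rem \<xi> k) = insert (\<xi> ! k - 1) (set \<xi> - {\<xi> ! k})"
proof -
  define v where "v = \<xi> ! k"
  have v2: "v \<ge> 2" using v strict_pos[OF st k] v_def by simp
  define ys where "ys = \<xi>[k := v - 1]"
  have r: "rem \<xi> k = ys" unfolding rem_def ys_def v_def using v by simp
  have sorted: "sorted_wrt (>) ys"
    unfolding sorted_wrt_iff_nth_less
  proof (intro allI impI)
    fix i j assume ij: "i < j" "j < length ys"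
    then have jl: "j < length \<xi>" unfolding ys_def by simp
    have lt: "\<xi> ! j < \<xi> ! i" using strict_less[OF st ij(1) jl] .
    show "ys ! j < ys ! i"
    proof (cases "i = k")
      case True
      then have "\<xi> ! j \<noteq> v - 1" using nk jl v_def by (metis nth_mem)
      then show ?thesis using True lt ij jl unfolding ys_def v_def by simp
    next
      case False
      then show ?thesis using lt ij jl v_def unfolding ys_def by (cases "j = k") auto
    qed
  qed
  have z: "0 \<notin> set ys"
  proof
    assume "0 \<in> set ys"
    then have "0 \<in> insert (v - 1) (set \<xi>)" using set_update_subset_insert unfolding ys_def by fast
    then show False using v2 st unfolding strict_def by auto
  qed
  have set': "set ys = insert (v - 1) (set \<xi> - {v})"
    unfolding ys_def v_def using set_update_distinct[OF strict_distinct[OF st] k] by simp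
  have sum': "sum_list \<xi> = Suc (sum_list ys)"
  proof -
    have "sum_list ys = sum_list \<xi> + (v - 1) - v" unfolding ys_def v_def by (rule sum_list_update[OF k])
    moreover have "v \<le> sum_list \<xi>" unfolding v_def by (rule elem_le_sum_list[OF k])
    ultimately show ?thesis using v2 by simp
  qed
  have partys: "part ys i = (if i = Suc k then v - 1 else part \<xi> i)" for i
    unfolding ys_def part_def using k by auto
  have D': "D ys = D \<xi> - {cell \<xi> k}"
  proof (intro set_eqI)
    fix x :: "nat \<times> nat"
    obtain i j where x: "x = (i, j)" by force
    have ck: "cell \<xi> k = (Suc k, k + v)" unfolding cell_def v_def by simp
    have lys: "length ys = length \<xi>" unfolding ys_def by simp
    have pk: "part \<xi> (Suc k) = v" using k v_def by (simp add: part_def)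
    show "x \<in> D ys \<longleftrightarrow> x \<in> D \<xi> - {cell \<xi> k}"
      unfolding x ck Diff_iff D_mem partys lys using pk v2 k by auto
  qed
  have "strict ys" unfolding strict_def using sorted z by simp
  then show ?thesis using D' sum' set' r unfolding v_def by simp
qed

lemma card_std_rec:
  assumes st: "strict \<xi>" and ne: "\<xi> \<noteq> []"
  shows "card (Std_s \<xi>) = (\<Sum>k\<in>{k. k < length \<xi> \<and> \<xi> ! k - 1 \<notin> set \<xi>}. card (Std_s (rem \<xi> k)))"
proof -
  define K where "K = {k. k < length \<xi> \<and> \<xi> ! k - 1 \<notin> set \<xi>}"
  define N where "N = sum_list \<xi>"
  have N1: "N \<ge> 1" unfolding N_def using ne st
    by (metis elem_le_sum_list length_greater_0_conv order.trans strict_pos)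
  have "card (Std_s \<xi>) = (\<Sum>c\<in>D \<xi>. card {T \<in> Std_s \<xi>. T c = N})"
    unfolding N_def by (rule std_split) (use N1 N_def in simp)
  also have "\<dots> = (\<Sum>c\<in>cell \<xi> ` K. card {T \<in> Std_s \<xi>. T c = N})"
  proof (rule sum.mono_neutral_right)
    show "finite (D \<xi>)" by (rule finite_D)
    show "cell \<xi> ` K \<subseteq> D \<xi>" unfolding K_def using cell_D[OF st] by auto
    show "\<forall>c\<in>D \<xi> - cell \<xi> ` K. card {T \<in> Std_s \<xi>. T c = N} = 0"
    proof
      fix c assume c: "c \<in> D \<xi> - cell \<xi> ` K"
      have "{T \<in> Std_s \<xi>. T c = N} = {}"
      proof (rule ccontr)
        assume "{T \<in> Std_s \<xi>. T c = N} \<noteq> {}"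
        then obtain T where T: "T \<in> Std_s \<xi>" "T c = N" by auto
        have "corner \<xi> c" using std_corner[OF T(1)] c T(2) N_def by auto
        then obtain k where "k < length \<xi>" "\<xi> ! k - 1 \<notin> set \<xi>" "c = cell \<xi> k"
          using corner_cell[OF st] c by blast
        then show False using c unfolding K_def by auto
      qed
      then show "card {T \<in> Std_s \<xi>. T c = N} = 0" by (metis card.empty)
    qed
  qed
  also have "\<dots> = (\<Sum>k\<in>K. card {T \<in> Std_s \<xi>. T (cell \<xi> k) = N})"
  proof (rule sum.reindex[unfolded comp_def])
    show "inj_on (cell \<xi>) K" by (rule inj_onI) (simp add: cell_def)
  qed
  also have "\<dots> = (\<Sum>k\<in>K. card (Std_s (rem \<xi> k)))"
  proof (rule sum.cong[OF refl])
    fix k assume kK: "k \<in> K"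
    then have k: "k < length \<xi>" "\<xi> ! k - 1 \<notin> set \<xi>" unfolding K_def by auto
    have props: "D (rem \<xi> k) = D \<xi> - {cell \<xi> k} \<and> sum_list \<xi> = Suc (sum_list (rem \<xi> k))"
      using rem_one[OF st k(1)] rem_big[OF st k(1) _ k(2)] by (cases "\<xi> ! k = 1") auto
    show "card {T \<in> Std_s \<xi>. T (cell \<xi> k) = N} = card (Std_s (rem \<xi> k))"
      unfolding N_def
      by (rule std_remove) (use props cell_D[OF st k(1)] cell_corner[OF st k] in auto)
  qed
  finally show ?thesis unfolding K_def .
qed



lemma D_cons: "(x, y) \<in> D (a # \<xi>) \<longleftrightarrow> (x = 1 \<and> 1 \<le> y \<and> y \<le> a) \<or> (x \<ge> 2 \<and> y \<ge> 1 \<and> (x - 1, y - 1) \<in> D \<xi>)"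
proof (cases "x = 1")
  case True
  then show ?thesis by (auto simp: D_mem part_def)
next
  case False
  show ?thesis
  proof (cases "x = 0")
    case True
    then show ?thesis by (auto simp: D_mem)
  next
    case False
    then obtain x' where x': "x = Suc (Suc x')" using \<open>x \<noteq> 1\<close> by (metis One_nat_def not0_implies_Suc)
    have "part (a # \<xi>) x = part \<xi> (x - 1)" unfolding part_def x' by auto
    then show ?thesis unfolding D_mem x' by auto
  qed
qed

definition sh :: "nat \<times> nat \<Rightarrow> nat \<times> nat" where
  "sh = (\<lambda>(i, j). (Suc i, Suc j))"

lemma inj_sh: "inj_on sh A"
  by (rule inj_onI) (auto simp: sh_def split: prod.splits)

lemma D_cons_filter:
  assumes "\<And>x y. P x y \<Longrightarrow> x \<ge> 2"
  shows "{(x, y). (x, y) \<in> D (a # \<xi>) \<and> P x y} = sh ` {(x, y). (x, y) \<in> D \<xi> \<and> P (Suc x) (Suc y)}"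
proof (intro equalityI subsetI)
  fix z assume "z \<in> {(x, y). (x, y) \<in> D (a # \<xi>) \<and> P x y}"
  then obtain x y where z: "z = (x, y)" "(x, y) \<in> D (a # \<xi>)" "P x y" by auto
  then have x2: "x \<ge> 2" using assms by auto
  then have "y \<ge> 1" "(x - 1, y - 1) \<in> D \<xi>" using z(2) D_cons by auto
  moreover have "z = sh (x - 1, y - 1)" using z x2 \<open>y \<ge> 1\<close> by (auto simp: sh_def)
  ultimately show "z \<in> sh ` {(x, y). (x, y) \<in> D \<xi> \<and> P (Suc x) (Suc y)}"
    using z x2 by (auto intro!: image_eqI[of _ _ "(x - 1, y - 1)"] simp: Suc_diff_1)
next
  fix z assume "z \<in> sh ` {(x, y). (x, y) \<in> D \<xi> \<and> P (Suc x) (Suc y)}"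
  then obtain x y where z: "z = (Suc x, Suc y)" "(x, y) \<in> D \<xi>" "P (Suc x) (Suc y)" by (auto simp: sh_def)
  then have "x \<ge> 1" by (auto simp: D_mem)
  then have "(Suc x, Suc y) \<in> D (a # \<xi>)" using z D_cons by auto
  then show "z \<in> {(x, y). (x, y) \<in> D (a # \<xi>) \<and> P x y}" using z by auto
qed

lemma D_cons_set: "D (a # \<xi>) = (\<lambda>j. (1, j)) ` {1..a} \<union> sh ` D \<xi>"
proof -
  have "D (a # \<xi>) = {(x, y). (x, y) \<in> D (a # \<xi>) \<and> x = 1} \<union> {(x, y). (x, y) \<in> D (a # \<xi>) \<and> x \<ge> 2}"
    by (auto simp: D_mem)
  also have "{(x, y). (x, y) \<in> D (a # \<xi>) \<and> x \<ge> 2} = sh ` {(x, y). (x, y) \<in> D \<xi> \<and> Suc x \<ge> 2}"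
    by (rule D_cons_filter) auto
  also have "{(x, y). (x, y) \<in> D \<xi> \<and> Suc x \<ge> 2} = D \<xi>" by (auto simp: D_mem)
  also have "{(x, y). (x, y) \<in> D (a # \<xi>) \<and> x = 1} = (\<lambda>j. (1, j)) ` {1..a}"
    using D_cons by auto
  finally show ?thesis .
qed

lemma hook_shift:
  assumes ij: "(i, j) \<in> D \<xi>"
  shows "shifted_hook (a # \<xi>) (Suc i) (Suc j) = sh ` shifted_hook \<xi> i j"
proof -
  have i1: "i \<ge> 1" "j \<ge> 1" using ij by (auto simp: D_mem)
  have cond: "(Suc j, Suc j) \<in> D (a # \<xi>) \<longleftrightarrow> (j, j) \<in> D \<xi>" using D_cons i1 by simp
  have R: "{(x, y). (x, y) \<in> D (a # \<xi>) \<and> (x = Suc i \<and> y > Suc j)} = sh ` {(x, y). (x, y) \<in> D \<xi> \<and> (x = i \<and> y > j)}"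
    using D_cons_filter[of "\<lambda>x y. x = Suc i \<and> y > Suc j" a \<xi>] i1 by simp
  have C: "{(x, y). (x, y) \<in> D (a # \<xi>) \<and> (y = Suc j \<and> x > Suc i)} = sh ` {(x, y). (x, y) \<in> D \<xi> \<and> (y = j \<and> x > i)}"
    using D_cons_filter[of "\<lambda>x y. y = Suc j \<and> x > Suc i" a \<xi>] i1 by simp
  have W: "{(x, y). (x, y) \<in> D (a # \<xi>) \<and> x = Suc j + 1} = sh ` {(x, y). (x, y) \<in> D \<xi> \<and> x = j + 1}"
    using D_cons_filter[of "\<lambda>x y. x = Suc j + 1" a \<xi>] i1 by simp
  have W': "sh ` (if (j, j) \<in> D \<xi> then {(x, y). (x, y) \<in> D \<xi> \<and> x = j + 1} else {})
      = (if (j, j) \<in> D \<xi> then sh ` {(x, y). (x, y) \<in> D \<xi> \<and> x = j + 1} else {})" by simp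
  show ?thesis
    unfolding shifted_hook_def image_Un W' cond
    by (simp only: R C W[symmetric]) (simp add: sh_def)
qed

lemma hl_shift:
  assumes "(i, j) \<in> D \<xi>"
  shows "shifted_hook_length (a # \<xi>) (Suc i) (Suc j) = shifted_hook_length \<xi> i j"
  unfolding shifted_hook_length_def hook_shift[OF assms] by (rule card_image[OF inj_sh])

definition Hp :: "nat list \<Rightarrow> real" where
  "Hp \<xi> = (\<Prod>(i, j)\<in>D \<xi>. real (shifted_hook_length \<xi> i j))"

lemma H_cons: "Hp (a # \<xi>) = (\<Prod>j\<in>{1..a}. real (shifted_hook_length (a # \<xi>) 1 j)) * Hp \<xi>"
proof -
  define f where "f = (\<lambda>(i, j). real (shifted_hook_length (a # \<xi>) i j))"
  have disj: "(\<lambda>j. (1, j)) ` {1..a} \<inter> sh ` D \<xi> = {}"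
    by (auto simp: sh_def D_mem)
  have "Hp (a # \<xi>) = prod f ((\<lambda>j. (1::nat, j)) ` {1..a} \<union> sh ` D \<xi>)"
    unfolding Hp_def f_def D_cons_set ..
  also have "\<dots> = prod f ((\<lambda>j. (1::nat, j)) ` {1..a}) * prod f (sh ` D \<xi>)"
    by (rule prod.union_disjoint) (use disj finite_D in auto)
  also have "prod f ((\<lambda>j. (1::nat, j)) ` {1..a}) = (\<Prod>j\<in>{1..a}. real (shifted_hook_length (a # \<xi>) 1 j))"
    by (subst prod.reindex) (auto simp: inj_on_def f_def)
  also have "prod f (sh ` D \<xi>) = Hp \<xi>"
    unfolding Hp_def
  proof (subst prod.reindex[OF inj_sh], rule prod.cong[OF refl])
    fix x assume x: "x \<in> D \<xi>"
    obtain i j where ij: "x = (i, j)" by force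
    show "(f \<circ> sh) x = (case x of (i, j) \<Rightarrow> real (shifted_hook_length \<xi> i j))"
      using hl_shift[of i j \<xi> a] x unfolding ij f_def sh_def by simp
  qed
  finally show ?thesis .
qed

definition Cset :: "nat list \<Rightarrow> nat \<Rightarrow> nat set" where
  "Cset \<xi> j = {r \<in> {1..length \<xi>}. Suc r \<le> j \<and> j \<le> r + part \<xi> r}"

lemma strict_tail: "strict (a # \<xi>) \<Longrightarrow> strict \<xi>"
  unfolding strict_def by simp

lemma strict_part_pos: "strict \<xi> \<Longrightarrow> 1 \<le> r \<Longrightarrow> r \<le> length \<xi> \<Longrightarrow> part \<xi> r \<ge> 1"
  using strict_pos[of \<xi> "r - 1"] by (simp add: part_nth)

lemma row1_hl:
  assumes st: "strict (a # \<xi>)" and j: "1 \<le> j" "j \<le> a"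
  shows "shifted_hook_length (a # \<xi>) 1 j = 1 + (a - j) + card (Cset \<xi> j) + part \<xi> j"
proof -
  have stx: "strict \<xi>" using strict_tail[OF st] .
  have pp: "r \<ge> 1 \<Longrightarrow> r \<le> length \<xi> \<Longrightarrow> part \<xi> r \<ge> 1" for r using strict_part_pos[OF stx] by blast
  define Rr where "Rr = {(x, y). (x, y) \<in> D (a # \<xi>) \<and> (x = 1 \<and> y > j)}"
  define Cc where "Cc = {(x, y). (x, y) \<in> D (a # \<xi>) \<and> (y = j \<and> x > 1)}"
  define Rw0 where "Rw0 = {(x, y). (x, y) \<in> D (a # \<xi>) \<and> x = j + 1}"
  define Rw where "Rw = (if (j, j) \<in> D (a # \<xi>) then Rw0 else {})"
  have hook: "shifted_hook (a # \<xi>) 1 j = (({(1, j)} \<union> Rr) \<union> Cc) \<union> Rw"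
    unfolding shifted_hook_def Rr_def Cc_def Rw_def Rw0_def by simp
  have Rr': "Rr = (\<lambda>y. (1, y)) ` {Suc j..a}"
    unfolding Rr_def using D_cons j by auto
  have Cc': "Cc = (\<lambda>r. (Suc r, j)) ` Cset \<xi> j"
  proof (intro equalityI subsetI)
    fix z assume "z \<in> Cc"
    then obtain x where z: "z = (x, j)" "(x, j) \<in> D (a # \<xi>)" "x > 1" unfolding Cc_def by auto
    then have x2: "x \<ge> 2" by simp
    then have m: "(x - 1, j - 1) \<in> D \<xi>" using z D_cons by auto
    then have r: "1 \<le> x - 1" "x - 1 \<le> length \<xi>" "x - 1 \<le> j - 1" "j - 1 \<le> x - 1 + part \<xi> (x - 1) - 1"
      by (auto simp: D_mem)
    have "part \<xi> (x - 1) \<ge> 1" using pp r by blast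
    then have "j \<le> x - 1 + part \<xi> (x - 1)" using r j x2 by linarith
    moreover have "Suc (x - 1) \<le> j" using r j x2 by linarith
    ultimately have "x - 1 \<in> Cset \<xi> j" unfolding Cset_def using r by simp
    moreover have "z = (Suc (x - 1), j)" using z x2 by simp
    ultimately show "z \<in> (\<lambda>r. (Suc r, j)) ` Cset \<xi> j" by blast
  next
    fix z assume "z \<in> (\<lambda>r. (Suc r, j)) ` Cset \<xi> j"
    then obtain r where z: "z = (Suc r, j)" and r: "r \<in> Cset \<xi> j" by auto
    then have r': "1 \<le> r" "r \<le> length \<xi>" "Suc r \<le> j" "j \<le> r + part \<xi> r" unfolding Cset_def by auto
    have "part \<xi> r \<ge> 1" using pp r' by blast
    then have "(r, j - 1) \<in> D \<xi>" using r' by (auto simp: D_mem)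
    then have "(Suc r, j) \<in> D (a # \<xi>)" using D_cons r' j by auto
    then show "z \<in> Cc" unfolding Cc_def z using r' by auto
  qed
  have Rw0': "Rw0 = (\<lambda>y. (Suc j, y)) ` {Suc j..j + part \<xi> j}"
  proof (intro equalityI subsetI)
    fix z assume "z \<in> Rw0"
    then obtain y where z: "z = (Suc j, y)" "(Suc j, y) \<in> D (a # \<xi>)" unfolding Rw0_def by auto
    then have "y \<ge> 1" "(j, y - 1) \<in> D \<xi>" using D_cons j by auto
    then have r: "1 \<le> j" "j \<le> length \<xi>" "j \<le> y - 1" "y - 1 \<le> j + part \<xi> j - 1" by (auto simp: D_mem)
    have "part \<xi> j \<ge> 1" using pp r by blast
    then have "y \<in> {Suc j..j + part \<xi> j}" using r by simp linarith
    then show "z \<in> (\<lambda>y. (Suc j, y)) ` {Suc j..j + part \<xi> j}" using z by blast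
  next
    fix z assume "z \<in> (\<lambda>y. (Suc j, y)) ` {Suc j..j + part \<xi> j}"
    then obtain y where z: "z = (Suc j, y)" and y: "Suc j \<le> y" "y \<le> j + part \<xi> j" by auto
    then have "part \<xi> j \<ge> 1" by simp
    then have jl: "j \<le> length \<xi>" unfolding part_def by (auto split: if_splits)
    have "(j, y - 1) \<in> D \<xi>" using y j jl by (auto simp: D_mem)
    moreover have "Suc j \<ge> 2" "y \<ge> 1" using j y by auto
    ultimately have "(Suc j, y) \<in> D (a # \<xi>)" unfolding D_cons by simp
    then show "z \<in> Rw0" unfolding Rw0_def z by simp
  qed
  have cRw: "card Rw = part \<xi> j"
  proof (cases "(j, j) \<in> D (a # \<xi>)")
    case True
    then have "card Rw = card ((\<lambda>y. (Suc j, y)) ` {Suc j..j + part \<xi> j})" unfolding Rw_def Rw0' by simp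
    also have "\<dots> = part \<xi> j" by (subst card_image) (auto simp: inj_on_def)
    finally show ?thesis .
  next
    case False
    have "j > length \<xi>"
    proof (rule ccontr)
      assume "\<not> j > length \<xi>"
      then have jl: "j \<le> length \<xi>" by simp
      have "(j, j) \<in> D (a # \<xi>)"
      proof (cases "j = 1")
        case True
        then show ?thesis using D_cons j by auto
      next
        case False
        have "part \<xi> (j - 1) \<ge> 1" using pp[of "j - 1"] False j jl by simp
        then have "(j - 1, j - 1) \<in> D \<xi>" unfolding D_mem using False j jl by linarith
        then show ?thesis using D_cons False j by auto
      qed
      then show False using \<open>(j, j) \<notin> D (a # \<xi>)\<close> by simp
    qed
    then have "part \<xi> j = 0" unfolding part_def by simp
    then show ?thesis unfolding Rw_def using False by simp
  qed
  have fin: "finite Rr" "finite Cc" "finite Rw" unfolding Rr' Cc' Rw_def Rw0' Cset_def by auto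
  have d1: "(1, j) \<notin> Rr" unfolding Rr' by auto
  have d2: "({(1, j)} \<union> Rr) \<inter> Cc = {}" unfolding Rr' Cc' by (auto simp: Cset_def)
  have d3: "(({(1, j)} \<union> Rr) \<union> Cc) \<inter> Rw = {}" unfolding Rr' Cc' Rw_def Rw0' using j by (auto simp: Cset_def)
  have "card ((({(1, j)} \<union> Rr) \<union> Cc) \<union> Rw) = card (({(1, j)} \<union> Rr) \<union> Cc) + card Rw"
    by (rule card_Un_disjoint) (use fin d3 in auto)
  also have "card (({(1, j)} \<union> Rr) \<union> Cc) = card ({(1, j)} \<union> Rr) + card Cc"
    by (rule card_Un_disjoint) (use fin d2 in auto)
  also have "card ({(1, j)} \<union> Rr) = Suc (card Rr)" using d1 fin by simp
  also have "card Rr = a - j" unfolding Rr' by (subst card_image) (auto simp: inj_on_def)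
  also have "card Cc = card (Cset \<xi> j)" unfolding Cc' by (subst card_image) (auto simp: inj_on_def)
  finally show ?thesis unfolding shifted_hook_length_def hook cRw by simp
qed

lemma rowprod:
  assumes st: "strict (a # \<xi>)"
  shows "(\<Prod>j\<in>{1..a}. 1 + (a - j) + card (Cset \<xi> j) + part \<xi> j) * (\<Prod>r\<in>{1..length \<xi>}. a - part \<xi> r)
         = fact a * (\<Prod>r\<in>{1..length \<xi>}. a + part \<xi> r)"
proof -
  define l where "l = length \<xi>"
  define p where "p = part \<xi>"
  define hh where "hh j = 1 + (a - j) + card (Cset \<xi> j) + part \<xi> j" for j
  have stx: "strict \<xi>" using strict_tail[OF st] .
  have pp: "p r \<ge> 1" if "1 \<le> r" "r \<le> l" for r using strict_part_pos[OF stx] that p_def l_def by blast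
  have pa: "p r < a" if "1 \<le> r" "r \<le> l" for r
  proof -
    have "p r = \<xi> ! (r - 1)" using that p_def l_def by (simp add: part_nth)
    moreover have "\<xi> ! (r - 1) \<in> set \<xi>" using that l_def by simp
    ultimately show ?thesis using st unfolding strict_def by simp
  qed
  have gap: "p r2 + (r2 - r1) \<le> p r1" if "1 \<le> r1" "r1 \<le> r2" "r2 \<le> l" for r1 r2
  proof -
    have "\<xi> ! (r2 - 1) + ((r2 - 1) - (r1 - 1)) \<le> \<xi> ! (r1 - 1)"
      by (rule strict_gap[OF stx]) (use that l_def in auto)
    then show ?thesis using that p_def l_def by (simp add: part_nth)
  qed
  have a1: "a \<ge> l + 1"
  proof (cases "l = 0")
    case True
    have "a \<noteq> 0" using st unfolding strict_def by auto
    then show ?thesis using True by simp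
  next
    case False
    have "p l + (l - 1) \<le> p 1" using gap[of 1 l] False by simp
    moreover have "p l \<ge> 1" using pp[of l] False by simp
    moreover have "p 1 < a" using pa[of 1] False by simp
    ultimately show ?thesis by linarith
  qed
  have Csub: "Cset \<xi> j \<subseteq> {1..l}" for j unfolding Cset_def l_def by auto
  have finC: "finite (Cset \<xi> j)" for j using Csub by (rule finite_subset) simp
  have cardC: "card (Cset \<xi> j) \<le> l" for j using card_mono[OF _ Csub[of j]] by simp
  have low: "hh j = a + p j" if j: "1 \<le> j" "j \<le> l + 1" for j
  proof -
    have "Cset \<xi> j = {1..j - 1}"
    proof (intro equalityI subsetI)
      fix r assume "r \<in> Cset \<xi> j"
      then show "r \<in> {1..j - 1}" unfolding Cset_def by auto
    next
      fix r assume r: "r \<in> {1..j - 1}"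
      then have rl: "1 \<le> r" "r \<le> l" using j by auto
      have "p l + (l - r) \<le> p r" using gap[of r l] rl by simp
      moreover have "p l \<ge> 1" using pp[of l] rl by simp
      ultimately have "j \<le> r + p r" using j rl by linarith
      then show "r \<in> Cset \<xi> j" unfolding Cset_def using r rl l_def p_def by auto
    qed
    then have "card (Cset \<xi> j) = j - 1" by simp
    then show ?thesis unfolding hh_def p_def using j a1 by simp
  qed
  have high: "hh j = 1 + (a - j) + card (Cset \<xi> j)" if "l + 2 \<le> j" for j
  proof -
    have "part \<xi> j = 0" using that l_def by (simp add: part_def)
    then show ?thesis unfolding hh_def by simp
  qed
  define J where "J = {l + 2..a}"
  define V where "V = hh ` J"
  define W where "W = (\<lambda>r. a - p r) ` {1..l}"
  have mono: "hh j' < hh j" if "j \<in> J" "j' \<in> J" "j < j'" for j j'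
  proof -
    have "Cset \<xi> j' \<subseteq> Cset \<xi> j" using that unfolding J_def Cset_def l_def by auto
    then have "card (Cset \<xi> j') \<le> card (Cset \<xi> j)" using finC by (rule card_mono[rotated])
    moreover have "a - j' < a - j" using that unfolding J_def by auto
    ultimately show ?thesis using that high unfolding J_def by auto
  qed
  have injV: "inj_on hh J"
  proof (rule inj_onI)
    fix j j' assume "j \<in> J" "j' \<in> J" "hh j = hh j'"
    then show "j = j'" using mono by (metis linorder_neq_iff order_less_irrefl)
  qed
  have injW: "inj_on (\<lambda>r. a - p r) {1..l}"
  proof -
    have lt: "a - p r1 < a - p r2" if "r1 \<in> {1..l}" "r2 \<in> {1..l}" "r1 < r2" for r1 r2
    proof -
      have "p r2 + (r2 - r1) \<le> p r1" using gap[of r1 r2] that by auto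
      moreover have "p r1 < a" using pa that by auto
      ultimately show ?thesis using that by linarith
    qed
    show ?thesis
    proof (rule inj_onI)
      fix r1 r2 assume "r1 \<in> {1..l}" "r2 \<in> {1..l}" "a - p r1 = a - p r2"
      then show "r1 = r2" using lt by (metis linorder_neq_iff order_less_irrefl)
    qed
  qed
  have Vsub: "V \<subseteq> {1..a - 1}"
  proof
    fix v assume "v \<in> V"
    then obtain j where j: "j \<in> J" "v = hh j" unfolding V_def by auto
    then have "v = 1 + (a - j) + card (Cset \<xi> j)" using high unfolding J_def by auto
    moreover have "card (Cset \<xi> j) \<le> l" by (rule cardC)
    ultimately show "v \<in> {1..a - 1}" using j unfolding J_def by auto
  qed
  have Wsub: "W \<subseteq> {1..a - 1}"
  proof
    fix w assume "w \<in> W"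
    then obtain r where r: "r \<in> {1..l}" "w = a - p r" unfolding W_def by auto
    then show "w \<in> {1..a - 1}" using pa[of r] pp[of r] by auto
  qed
  have VW: "V \<inter> W = {}"
  proof (rule ccontr)
    assume "V \<inter> W \<noteq> {}"
    then obtain j r where j: "j \<in> J" and r: "r \<in> {1..l}" and eq: "hh j = a - p r"
      unfolding V_def W_def by blast
    define c where "c = card (Cset \<xi> j)"
    have jj: "l + 2 \<le> j" "j \<le> a" using j unfolding J_def by auto
    have e: "1 + (a - j) + c = a - p r" using eq high[OF jj(1)] c_def by simp
    have pra: "p r < a" using pa r by auto
    show False
    proof (cases "j \<le> r + p r")
      case True
      have "{1..r} \<subseteq> Cset \<xi> j"
      proof
        fix r' assume r': "r' \<in> {1..r}"
        then have "p r + (r - r') \<le> p r'" using gap[of r' r] r by auto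
        then have "j \<le> r' + p r'" using True r' by auto
        then show "r' \<in> Cset \<xi> j" unfolding Cset_def using r' r jj l_def p_def by auto
      qed
      then have "card {1..r} \<le> card (Cset \<xi> j)" by (rule card_mono[OF finC])
      then have "r \<le> c" unfolding c_def by simp
      then show False using e jj pra True by linarith
    next
      case False
      have "Cset \<xi> j \<subseteq> {1..r - 1}"
      proof
        fix r' assume r': "r' \<in> Cset \<xi> j"
        then have r'': "1 \<le> r'" "r' \<le> l" "j \<le> r' + p r'" unfolding Cset_def l_def p_def by auto
        show "r' \<in> {1..r - 1}"
        proof (rule ccontr)
          assume "r' \<notin> {1..r - 1}"
          then have "r \<le> r'" using r'' by auto
          then have "p r' + (r' - r) \<le> p r" using gap[of r r'] r r'' by auto
          then show False using False r'' \<open>r \<le> r'\<close> by linarith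
        qed
      qed
      then have "card (Cset \<xi> j) \<le> card {1..r - 1}" by (rule card_mono[rotated]) simp
      then have "c \<le> r - 1" unfolding c_def by simp
      then show False using e jj pra False r by auto
    qed
  qed
  have cV: "card V = a - (l + 1)" unfolding V_def J_def using card_image[OF injV] J_def by simp
  have cW: "card W = l" unfolding W_def using card_image[OF injW] by simp
  have finVW: "finite V" "finite W" unfolding V_def W_def J_def by auto
  have UVW: "V \<union> W = {1..a - 1}"
  proof (rule card_subset_eq)
    show "finite {1..a - 1}" by simp
    show "V \<union> W \<subseteq> {1..a - 1}" using Vsub Wsub by auto
    show "card (V \<union> W) = card {1..a - 1}"
      using card_Un_disjoint[OF finVW VW] cV cW a1 by simp
  qed
  have key: "(\<Prod>j\<in>J. hh j) * (\<Prod>r\<in>{1..l}. a - p r) = fact (a - 1)"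
  proof -
    have "(\<Prod>j\<in>J. hh j) = \<Prod>V" unfolding V_def by (simp add: prod.reindex[OF injV])
    moreover have "(\<Prod>r\<in>{1..l}. a - p r) = \<Prod>W" unfolding W_def prod.reindex[OF injW] comp_def ..
    moreover have "\<Prod>V * \<Prod>W = \<Prod>(V \<union> W)" using prod.union_disjoint[OF finVW VW, of "\<lambda>x. x"] by simp
    ultimately show ?thesis using UVW by (simp add: fact_prod)
  qed
  have split: "{1..a} = {1..l} \<union> ({l + 1} \<union> J)" unfolding J_def using a1 by auto
  have "(\<Prod>j\<in>{1..a}. hh j) = (\<Prod>j\<in>{1..l}. hh j) * (hh (l + 1) * (\<Prod>j\<in>J. hh j))"
    unfolding split by (subst prod.union_disjoint) (auto simp: J_def)
  also have "(\<Prod>j\<in>{1..l}. hh j) = (\<Prod>r\<in>{1..l}. a + p r)" by (rule prod.cong) (auto simp: low)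
  also have "hh (l + 1) = a" using low[of "l + 1"] by (simp add: p_def l_def part_def)
  finally have "(\<Prod>j\<in>{1..a}. hh j) * (\<Prod>r\<in>{1..l}. a - p r)
      = (\<Prod>r\<in>{1..l}. a + p r) * a * ((\<Prod>j\<in>J. hh j) * (\<Prod>r\<in>{1..l}. a - p r))"
    by (simp add: algebra_simps)
  also have "\<dots> = (\<Prod>r\<in>{1..l}. a + p r) * (a * fact (a - 1))" unfolding key by simp
  also have "a * fact (a - 1) = fact a" using a1 by (simp add: fact_reduce[of a])
  finally show ?thesis unfolding hh_def p_def l_def by (simp add: algebra_simps)
qed

lemma D_Nil: "D [] = {}" by (auto simp: D_mem)

lemma part_image: "strict \<xi> \<Longrightarrow> part \<xi> ` {1..length \<xi>} = set \<xi>"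
proof (intro equalityI subsetI)
  fix x assume "x \<in> part \<xi> ` {1..length \<xi>}"
  then obtain r where r: "r \<in> {1..length \<xi>}" "x = part \<xi> r" by auto
  then have "r - 1 < length \<xi>" by auto
  then have "\<xi> ! (r - 1) \<in> set \<xi>" by (rule nth_mem)
  then show "x \<in> set \<xi>" using r by (simp add: part_nth)
next
  fix x assume "x \<in> set \<xi>"
  then obtain k where k: "k < length \<xi>" "x = \<xi> ! k" by (auto simp: in_set_conv_nth)
  then have "x = part \<xi> (Suc k)" by (simp add: part_nth)
  moreover have "Suc k \<in> {1..length \<xi>}" using k by simp
  ultimately show "x \<in> part \<xi> ` {1..length \<xi>}" by blast
qed

lemma part_inj: "strict \<xi> \<Longrightarrow> inj_on (part \<xi>) {1..length \<xi>}"
proof (rule inj_onI)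
  fix r1 r2 assume st: "strict \<xi>" and r: "r1 \<in> {1..length \<xi>}" "r2 \<in> {1..length \<xi>}" and eq: "part \<xi> r1 = part \<xi> r2"
  then have "\<xi> ! (r1 - 1) = \<xi> ! (r2 - 1)" by (simp add: part_nth)
  moreover have "r1 - 1 < length \<xi>" "r2 - 1 < length \<xi>" using r by auto
  ultimately have "r1 - 1 = r2 - 1" using nth_eq_iff_index_eq[OF strict_distinct[OF st]] by blast
  then show "r1 = r2" using r by (simp add: Suc_le_eq) linarith
qed

lemma Hp_Pp: "strict \<xi> \<Longrightarrow> Hp \<xi> * Pp (set \<xi>) = (\<Prod>s\<in>set \<xi>. fact s)"
proof (induction \<xi>)
  case Nil
  then show ?case by (simp add: Hp_def D_Nil Pp_def)
next
  case (Cons a \<xi>)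
  have st: "strict (a # \<xi>)" by fact
  have stx: "strict \<xi>" using strict_tail[OF st] .
  define S where "S = set \<xi>"
  have aS: "a \<notin> S" "\<forall>t\<in>S. t < a" using st unfolding strict_def S_def by auto
  have finS: "finite S" unfolding S_def by simp
  define hh where "hh j = 1 + (a - j) + card (Cset \<xi> j) + part \<xi> j" for j
  define R where "R = real (\<Prod>j\<in>{1..a}. hh j)"
  have HR: "Hp (a # \<xi>) = R * Hp \<xi>"
  proof -
    have "(\<Prod>j\<in>{1..a}. real (shifted_hook_length (a # \<xi>) 1 j)) = (\<Prod>j\<in>{1..a}. real (hh j))"
      by (rule prod.cong[OF refl]) (use row1_hl[OF st] in \<open>auto simp: hh_def\<close>)
    then show ?thesis unfolding H_cons R_def by simp
  qed
  have rp: "R * (\<Prod>r\<in>{1..length \<xi>}. real (a - part \<xi> r)) = fact a * (\<Prod>r\<in>{1..length \<xi>}. real (a + part \<xi> r))"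
    using arg_cong[OF rowprod[OF st], of real] unfolding R_def hh_def by (simp add: of_nat_prod)
  have conv: "(\<Prod>r\<in>{1..length \<xi>}. g (part \<xi> r)) = (\<Prod>t\<in>S. g t)" for g :: "nat \<Rightarrow> real"
    unfolding S_def part_image[OF stx, symmetric] prod.reindex[OF part_inj[OF stx]] comp_def ..
  have rp2: "R * (\<Prod>t\<in>S. real (a - t)) = fact a * (\<Prod>t\<in>S. real (a + t))"
    using rp unfolding conv[of "\<lambda>t. real (a - t)"] conv[of "\<lambda>t. real (a + t)"] .
  have Q: "(\<Prod>t\<in>S. \<bar>real a - real t\<bar> / (real a + real t)) = (\<Prod>t\<in>S. real (a - t)) / (\<Prod>t\<in>S. real (a + t))"
  proof -
    have "(\<Prod>t\<in>S. \<bar>real a - real t\<bar> / (real a + real t)) = (\<Prod>t\<in>S. real (a - t) / real (a + t))"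
      by (rule prod.cong[OF refl]) (use aS in \<open>auto simp: of_nat_diff\<close>)
    then show ?thesis by (simp add: prod_dividef)
  qed
  have nz: "(\<Prod>t\<in>S. real (a + t)) \<noteq> 0" using finS aS
    by (subst prod_zero_iff) auto
  have RQ: "R * (\<Prod>t\<in>S. \<bar>real a - real t\<bar> / (real a + real t)) = fact a"
    unfolding Q using rp2 nz by (simp add: field_simps)
  have "Hp (a # \<xi>) * Pp (set (a # \<xi>)) = R * Hp \<xi> * (Pp S * (\<Prod>t\<in>S. \<bar>real a - real t\<bar> / (real a + real t)))"
    unfolding HR using Pp_insert[OF finS aS(1)] S_def by simp
  also have "\<dots> = (R * (\<Prod>t\<in>S. \<bar>real a - real t\<bar> / (real a + real t))) * (Hp \<xi> * Pp S)"
    by (simp add: algebra_simps)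
  also have "\<dots> = fact a * (\<Prod>s\<in>S. fact s)" unfolding RQ using Cons.IH[OF stx] S_def by simp
  also have "\<dots> = (\<Prod>s\<in>set (a # \<xi>). fact s)" using finS aS S_def by simp
  finally show ?case .
qed

lemma Pp_nz: "finite S \<Longrightarrow> Pp S \<noteq> 0"
  unfolding Pp_def by (subst prod_zero_iff; auto simp: prod_zero_iff)+

lemma hook_formula:
  assumes st: "strict \<xi>"
  shows "fact (sum_list \<xi>) / Hp \<xi> = gS (set \<xi>)"
proof -
  have e: "Hp \<xi> * Pp (set \<xi>) = (\<Prod>s\<in>set \<xi>. fact s)" by (rule Hp_Pp[OF st])
  have pnz: "Pp (set \<xi>) \<noteq> 0" by (rule Pp_nz) simp
  have sum: "sum_list \<xi> = \<Sum>(set \<xi>)" using sum_list_distinct_conv_sum_set[OF strict_distinct[OF st], of "\<lambda>x. x"] by simp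
  have "gS (set \<xi>) = fact (sum_list \<xi>) / (Hp \<xi> * Pp (set \<xi>)) * Pp (set \<xi>)"
    unfolding gS_def e sum ..
  also have "\<dots> = fact (sum_list \<xi>) / Hp \<xi>" using pnz by simp
  finally show ?thesis by simp
qed



lemma Std_Nil: "Std_s [] = {\<lambda>_. 0}"
proof (intro equalityI subsetI)
  fix T assume "T \<in> Std_s []"
  then have "\<forall>x. T x = 0" unfolding Std_s_def D_Nil by simp
  then show "T \<in> {\<lambda>_. 0}" by auto
next
  fix T assume "T \<in> {\<lambda>_ :: nat \<times> nat. 0 :: nat}"
  then show "T \<in> Std_s []" unfolding Std_s_def D_Nil by (simp add: bij_betw_def)
qed

lemma std_count: "strict \<xi> \<Longrightarrow> real (card (Std_s \<xi>)) = gS (set \<xi>)"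
proof (induction "sum_list \<xi>" arbitrary: \<xi> rule: less_induct)
  case less
  have st: "strict \<xi>" by fact
  show ?case
  proof (cases "\<xi> = []")
    case True
    then show ?thesis by (simp add: Std_Nil gS_def Pp_def)
  next
    case False
    define K where "K = {k. k < length \<xi> \<and> \<xi> ! k - 1 \<notin> set \<xi>}"
    define S where "S = set \<xi>"
    have z: "0 \<notin> S" using st unfolding strict_def S_def by simp
    have finS: "finite S" unfolding S_def by simp
    have G: "real (card (Std_s (rem \<xi> k))) = gS (insert (\<xi> ! k - 1) (S - {\<xi> ! k}))" if k: "k \<in> K" for k
    proof -
      have k': "k < length \<xi>" "\<xi> ! k - 1 \<notin> set \<xi>" using k K_def by auto
      show ?thesis
      proof (cases "\<xi> ! k = 1")
        case True
        note r = rem_one[OF st k'(1) True]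
        have "real (card (Std_s (rem \<xi> k))) = gS (set (rem \<xi> k))"
          using r by (intro less.hyps) auto
        also have "\<dots> = gS (S - {1})" using r S_def by simp
        also have "\<dots> = gS (insert 0 (S - {1}))" using finS z by (simp add: gS_insert0)
        finally show ?thesis using True by simp
      next
        case False
        note r = rem_big[OF st k'(1) False k'(2)]
        have "real (card (Std_s (rem \<xi> k))) = gS (set (rem \<xi> k))"
          using r by (intro less.hyps) auto
        then show ?thesis using r S_def by simp
      qed
    qed
    have injK: "inj_on (\<lambda>k. \<xi> ! k) K"
      using nth_eq_iff_index_eq[OF strict_distinct[OF st]] unfolding K_def by (auto simp: inj_on_def)
    have imK: "(\<lambda>k. \<xi> ! k) ` K = {s \<in> S. s - 1 \<notin> S}"
      unfolding K_def S_def by (auto simp: in_set_conv_nth)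
    have "real (card (Std_s \<xi>)) = (\<Sum>k\<in>K. real (card (Std_s (rem \<xi> k))))"
      unfolding card_std_rec[OF st False] K_def by simp
    also have "\<dots> = (\<Sum>k\<in>K. gS (insert (\<xi> ! k - 1) (S - {\<xi> ! k})))"
      by (rule sum.cong[OF refl]) (rule G)
    also have "\<dots> = (\<Sum>s\<in>{s \<in> S. s - 1 \<notin> S}. gS (insert (s - 1) (S - {s})))"
      unfolding imK[symmetric] sum.reindex[OF injK] comp_def ..
    also have "\<dots> = gS S" using gS_rec[OF finS _ z] False S_def by simp
    finally show ?thesis unfolding S_def .
  qed
qed

lemma rem_gS:
  assumes st: "strict \<xi>" and k: "k < length \<xi>" and nk: "\<xi> ! k - 1 \<notin> set \<xi>"
  shows "real (card (Std_s (rem \<xi> k))) = gS (insert (\<xi> ! k - 1) (set \<xi> - {\<xi> ! k}))"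
proof (cases "\<xi> ! k = 1")
  case True
  note r = rem_one[OF st k True]
  have z: "0 \<notin> set \<xi>" using st unfolding strict_def by simp
  have "real (card (Std_s (rem \<xi> k))) = gS (set (rem \<xi> k))" using r by (intro std_count) auto
  also have "\<dots> = gS (set \<xi> - {1})" using r by simp
  also have "\<dots> = gS (insert 0 (set \<xi> - {1}))" using z by (simp add: gS_insert0)
  finally show ?thesis using True by simp
next
  case False
  note r = rem_big[OF st k False nk]
  have "real (card (Std_s (rem \<xi> k))) = gS (set (rem \<xi> k))" using r by (intro std_count) auto
  then show ?thesis using r by simp
qed

lemma SP_strict: "\<xi> \<in> SP n \<Longrightarrow> strict \<xi> \<and> sum_list \<xi> = n"
  unfolding SP_def strict_def by auto

lemma two_row_card:
  fixes p u :: nat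
  assumes u1: "1 \<le> u" and up: "2 * u + 3 \<le> p"
  defines "\<xi> \<equiv> [p - u, u]"
  shows "real (card {T \<in> Std_s \<xi>. T (2, u + 1) > T (1, p - u)})
    = (real p - 2 * real u + 1) / (real p - real u) * real ((p - 2) choose (u - 1))"
proof -
  have st: "strict \<xi>" unfolding \<xi>_def strict_def using u1 up by auto
  have sum: "sum_list \<xi> = p" unfolding \<xi>_def using up by simp
  have c0: "cell \<xi> 0 = (1, p - u)" unfolding cell_def \<xi>_def by simp
  have c1: "cell \<xi> 1 = (2, u + 1)" unfolding cell_def \<xi>_def by simp
  have l2: "length \<xi> = 2" unfolding \<xi>_def by simp
  have n1: "\<xi> ! 1 - 1 \<notin> set \<xi>" unfolding \<xi>_def using u1 up by auto
  have D0: "(1, p - u) \<in> D \<xi>" using cell_D[OF st, of 0] c0 l2 by simp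
  have D1: "(2, u + 1) \<in> D \<xi>" using cell_D[OF st, of 1] c1 l2 by simp
  have eqset: "{T \<in> Std_s \<xi>. T (2, u + 1) > T (1, p - u)} = {T \<in> Std_s \<xi>. T (cell \<xi> 1) = sum_list \<xi>}"
  proof (intro equalityI subsetI)
    fix T assume "T \<in> {T \<in> Std_s \<xi>. T (2, u + 1) > T (1, p - u)}"
    then have T: "T \<in> Std_s \<xi>" "T (2, u + 1) > T (1, p - u)" by auto
    have "sum_list \<xi> \<ge> 1" using sum up by simp
    then have "sum_list \<xi> \<in> T ` D \<xi>" using T(1) unfolding Std_s_def bij_betw_def by auto
    then obtain c where c: "c \<in> D \<xi>" "T c = sum_list \<xi>" by auto
    then obtain k where k: "k < length \<xi>" "c = cell \<xi> k"
      using corner_cell[OF st c(1) std_corner[OF T(1) c]] by blast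
    have "k = 1"
    proof (rule ccontr)
      assume "k \<noteq> 1"
      then have "k = 0" using k l2 by simp
      then have "T (1, p - u) = sum_list \<xi>" using c k c0 by simp
      then show False using T(2) std_range[OF T(1) D1] by simp
    qed
    then show "T \<in> {T \<in> Std_s \<xi>. T (cell \<xi> 1) = sum_list \<xi>}" using T c k by simp
  next
    fix T assume "T \<in> {T \<in> Std_s \<xi>. T (cell \<xi> 1) = sum_list \<xi>}"
    then have T: "T \<in> Std_s \<xi>" "T (2, u + 1) = sum_list \<xi>" using c1 by auto
    have inj: "inj_on T (D \<xi>)" using T(1) unfolding Std_s_def bij_betw_def by auto
    have "T (1, p - u) \<noteq> T (2, u + 1)" using inj_onD[OF inj _ D0 D1] by auto
    moreover have "T (1, p - u) \<le> sum_list \<xi>" using std_range[OF T(1) D0] by simp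
    ultimately show "T \<in> {T \<in> Std_s \<xi>. T (2, u + 1) > T (1, p - u)}" using T by auto
  qed
  have props: "D (rem \<xi> 1) = D \<xi> - {cell \<xi> 1} \<and> sum_list \<xi> = Suc (sum_list (rem \<xi> 1))"
    using rem_one[OF st _] rem_big[OF st _ _ n1] l2 by (cases "\<xi> ! 1 = 1") auto
  have "card {T \<in> Std_s \<xi>. T (cell \<xi> 1) = sum_list \<xi>} = card (Std_s (rem \<xi> 1))"
    by (rule std_remove) (use props cell_D[OF st, of 1] cell_corner[OF st _ n1] l2 in auto)
  then have "real (card {T \<in> Std_s \<xi>. T (2, u + 1) > T (1, p - u)}) = gS (insert (u - 1) (set \<xi> - {u}))"
    using rem_gS[OF st _ n1] l2 eqset unfolding \<xi>_def by simp
  also have "set \<xi> - {u} = {p - u}" unfolding \<xi>_def using up by auto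
  also have "gS (insert (u - 1) {p - u}) = fact (p - 1) / (fact (u - 1) * fact (p - u)) * ((real p - 2 * real u + 1) / (real p - 1))"
  proof -
    have ne: "u - 1 \<noteq> p - u" "u - 1 \<notin> {p - u}" using up by auto
    have s: "\<Sum>(insert (u - 1) {p - u}) = p - 1" using ne up u1 by simp
    have "Pp (insert (u - 1) {p - u}) = Pp {p - u} * (\<bar>real (u - 1) - real (p - u)\<bar> / (real (u - 1) + real (p - u)))"
      using Pp_insert[of "{p - u}" "u - 1"] ne by simp
    also have "Pp {p - u} = 1"
    proof -
      have "{t \<in> {p - u}. t < p - u} = {}" by auto
      then show ?thesis unfolding Pp_def by (simp only: prod.insert_if prod.empty finite.emptyI empty_iff if_False mult_1_right)
    qed
    also have "\<bar>real (u - 1) - real (p - u)\<bar> / (real (u - 1) + real (p - u)) = (real p - 2 * real u + 1) / (real p - 1)"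
      using u1 up by (simp add: of_nat_diff)
    finally have "Pp (insert (u - 1) {p - u}) = (real p - 2 * real u + 1) / (real p - 1)" by simp
    then show ?thesis unfolding gS_def s using ne by simp
  qed
  also have "\<dots> = (real p - 2 * real u + 1) / (real p - real u) * real ((p - 2) choose (u - 1))"
  proof -
    have b: "real ((p - 2) choose (u - 1)) = fact (p - 2) / (fact (u - 1) * fact (p - u - 1))"
    proof -
      have "u - 1 \<le> p - 2" using up by simp
      then have "real ((p - 2) choose (u - 1)) = fact (p - 2) / (fact (u - 1) * fact (p - 2 - (u - 1)))"
        by (rule binomial_fact)
      moreover have "p - 2 - (u - 1) = p - u - 1" using up u1 by simp
      ultimately show ?thesis by simp
    qed
    have f1: "fact (p - 1) = (real p - 1) * fact (p - 2)"
    proof -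
      have "fact (p - 1) = real (p - 1) * fact (p - 1 - 1)" using up by (simp add: fact_reduce)
      moreover have "p - 1 - 1 = p - 2" by simp
      ultimately show ?thesis using up by (simp add: of_nat_diff)
    qed
    have f2: "fact (p - u) = (real p - real u) * fact (p - u - 1)"
    proof -
      have "fact (p - u) = real (p - u) * fact (p - u - 1)" using up by (simp add: fact_reduce)
      then show ?thesis using up by (simp add: of_nat_diff)
    qed
    have nz: "real p - 1 \<noteq> 0" "real p - real u \<noteq> 0" using up by auto
    have nz2: "fact (u - 1) \<noteq> (0::real)" "fact (p - u - 1) \<noteq> (0::real)" "fact (p - 2) \<noteq> (0::real)" by auto
    have gen: "(B * X) / (Y * (C * Z)) * (A / B) = A / C * (X / (Y * Z))"
      if "B \<noteq> 0" "C \<noteq> 0" "Y \<noteq> 0" "Z \<noteq> 0" for A B C X Y Z :: real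
      using that by (simp add: field_simps)
    show ?thesis unfolding b f1 f2 by (rule gen) (use nz nz2 in auto)
  qed
  finally show ?thesis .
qed

theorem proposition3p21:
  fixes p n :: nat and \<xi> :: "nat list"
  assumes "prime p" and "p \<ge> 3" and "n \<le> p" and "\<xi> \<in> CPs p n"
  shows "(\<forall>u. 1 \<le> u \<and> 2 * u + 3 \<le> p \<and> \<xi> = [p - u, u] \<longrightarrow>
            real (card (Std_s_p p \<xi>)) =
              (real n - 2 * real u + 1) / (real n - real u) * real ((n - 2) choose (u - 1)))
       \<and> ((\<nexists>u. 1 \<le> u \<and> 2 * u + 3 \<le> p \<and> \<xi> = [p - u, u]) \<longrightarrow>
            real (card (Std_s_p p \<xi>)) =
              fact n / (\<Prod>(i, j)\<in>shifted_diagram \<xi>. real (shifted_hook_length \<xi> i j)))"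
proof (intro conjI allI impI)
  have sp: "\<xi> \<in> SP n" using assms(4) unfolding CPs_def by simp
  have st: "strict \<xi>" and sn: "sum_list \<xi> = n" using SP_strict[OF sp] by auto
  {
    fix u assume u: "1 \<le> u \<and> 2 * u + 3 \<le> p \<and> \<xi> = [p - u, u]"
    have n: "n = p" using sn u by auto
    have cond: "\<exists>u. 1 \<le> u \<and> 2 * u + 3 \<le> p \<and> part \<xi> 1 = p - u \<and> part \<xi> 2 = u"
      using u by (auto simp: part_def)
    have "Std_s_p p \<xi> = {T \<in> Std_s \<xi>. T (2, u + 1) > T (1, p - u)}"
      unfolding Std_s_p_def using cond u by (simp add: part_def)
    then show "real (card (Std_s_p p \<xi>)) =
              (real n - 2 * real u + 1) / (real n - real u) * real ((n - 2) choose (u - 1))"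
      using two_row_card[of u p] u n by simp
  }
  {
    assume nu: "\<nexists>u. 1 \<le> u \<and> 2 * u + 3 \<le> p \<and> \<xi> = [p - u, u]"
    have ncond: "\<not> (\<exists>u. 1 \<le> u \<and> 2 * u + 3 \<le> p \<and> part \<xi> 1 = p - u \<and> part \<xi> 2 = u)"
    proof
      assume "\<exists>u. 1 \<le> u \<and> 2 * u + 3 \<le> p \<and> part \<xi> 1 = p - u \<and> part \<xi> 2 = u"
      then obtain u where u: "1 \<le> u" "2 * u + 3 \<le> p" "part \<xi> 1 = p - u" "part \<xi> 2 = u" by auto
      have l2: "length \<xi> \<ge> 2" using u(1,4) unfolding part_def by (auto split: if_splits)
      then obtain x0 x1 rest where xs: "\<xi> = x0 # x1 # rest"
        by (metis One_nat_def Suc_1 Suc_le_length_iff)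
      have x: "x0 = p - u" "x1 = u" using u unfolding xs part_def by auto
      have "sum_list \<xi> = p + sum_list rest" unfolding xs x using u by simp
      then have "sum_list rest = 0" using sn assms(3) by simp
      moreover have "0 \<notin> set rest" using st unfolding strict_def xs by simp
      ultimately have "rest = []" by (cases rest) auto
      then show False using nu u xs x by auto
    qed
    have "Std_s_p p \<xi> = Std_s \<xi>" unfolding Std_s_p_def by (rule if_not_P[OF ncond])
    then have "real (card (Std_s_p p \<xi>)) = gS (set \<xi>)" using std_count[OF st] by simp
    also have "\<dots> = fact n / Hp \<xi>" using hook_formula[OF st] sn by simp
    finally show "real (card (Std_s_p p \<xi>)) =
              fact n / (\<Prod>(i, j)\<in>shifted_diagram \<xi>. real (shifted_hook_length \<xi> i j))"
      unfolding Hp_def .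
  }
qed


end
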